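(* Let $n\ge1$ and $\theta=[p](\tau_1,\dots,\tau_p)\in\Theta_n$. There is an isomorphism of $\Theta_n$-sets $\mathcal J(\theta)\cong\mathcal J'(\theta)$.
   Context: $\Theta_n=\Delta\wr\Theta_{n-1}$ ($\Theta_0$ terminal; $\Delta\wr\mathcal C$ has objects $[p](x_1,\dots,x_p)$ and morphisms given by $f:[p]\to[q]$ in $\Delta$ and morphisms $x_i\to y_j$ for $f(i-1)<j\le f(i)$); $\Theta_n$ is a full subcategory of strict $n$-categories, $N_n$ its nerve. We write $\theta$ also for the representable $\Theta_n[\theta]$. Let $I=[1]([0])$ (the representable $1$-globe) and $J=N_n(J_1)$, the nerve of the free groupoid on one arrow $0\to1$; the inclusion $I\to J$ picks the arrow $0\to1$. $\mathcal J(\theta):=\theta\times I\sqcup_{\theta_0\times I}\theta_0\times J$, where $\theta_0$ is the constant presheaf on the set $\Theta_n[\theta]_{[0]}$ of objects of $\theta$, mapped into $\theta$ in the evident (monomorphic) way. For $0\le i\le p$ let $\theta^i=[p+1](\tau_1,\dots,\tau_i,[0],\tau_{i+1},\dots,\tau_p)$; let $\alpha^i:\theta\to\theta^i$ ($0\le i\le p-1$) have underlying map skipping $i+1$, and $\beta^i:\theta\to\theta^i$ ($1\le i\le p$) underlying map skipping $i$, with identity components on the $\tau_j$ and the unique maps to $[0]$ on the inserted position. Let $\theta^i_J$ be the pushout of $\theta^i\leftarrow I\to J$, where $I\to\theta^i$ is the map with underlying $[1]\to[p+1]$, $0\mapsto i$, $1\mapsto i+1$, and $\varphi^i:\theta^i\to\theta^i_J$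 the induced map. $\mathcal J'(\theta)$ is the colimit of the diagram $\theta^0_J\xleftarrow{\varphi^0\alpha^0}\theta\xrightarrow{\varphi^1\beta^1}\theta^1_J\xleftarrow{\varphi^1\alpha^1}\theta\to\cdots\xleftarrow{\varphi^{p-1}\alpha^{p-1}}\theta\xrightarrow{\varphi^p\beta^p}\theta^p_J$. *)

theory Defs
  imports Main "HOL-Library.FuncSet"
begin

section \<open>The category Theta_n, concretely (iterated wreath product with Delta)\<close>

text \<open>Objects: an object [p](t_1,...,t_p) is the tree T [t_1,...,t_p]; [0] is T [].\<close>
datatype tree = T "tree list"

text \<open>Theta_0 is terminal (only T []); Theta_(n+1) = Delta wr Theta_n.\<close>
fun obj :: "nat \<Rightarrow> tree \<Rightarrow> bool" where
  "obj 0 (T ts) = (ts = [])"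
| "obj (Suc n) (T ts) = (\<forall>t\<in>set ts. obj n t)"

text \<open>Morphisms: H f cs, where f = [f(0),...,f(p)] is the underlying map [p] -> [q]
  of Delta and cs ! i (0-based component i, i.e. the paper's component i+1) lists the
  morphisms x_(i+1) -> y_j for f(i) < j <= f(i+1), in increasing order of j.\<close>
datatype hom = H "nat list" "hom list list"

inductive ishom :: "tree \<Rightarrow> tree \<Rightarrow> hom \<Rightarrow> bool" where
  "\<lbrakk> length f = Suc (length xs); \<forall>k<length f. f ! k \<le> length ys; sorted f;
     length cs = length xs;
     \<forall>i<length xs. length (cs ! i) = f ! Suc i - f ! i \<and>
        (\<forall>k<length (cs ! i). ishom (xs ! i) (ys ! (f ! i + k)) (cs ! i ! k)) \<rbrakk>
   \<Longrightarrow> ishom (T xs) (T ys) (H f cs)"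

text \<open>Composition: comp m2 m1 is m2 \<circ> m1 (first m1, then m2).\<close>
lemma size_mem_hom_list: "c \<in> set (l :: hom list) \<Longrightarrow> size c < size_list size l"
  by (induction l) auto

function comp :: "hom \<Rightarrow> hom \<Rightarrow> hom" where
  "comp (H g ds) (H f cs) =
     H (map (\<lambda>k. g ! k) f)
       (map (\<lambda>i. concat (map (\<lambda>k. map (\<lambda>d. comp d (cs ! i ! k)) (ds ! (f ! i + k)))
                              [0..<length (cs ! i)]))
            [0..<length cs])"
  by pat_completeness auto
termination
proof (relation "measure (\<lambda>(a, b). size b)")
  show "wf (measure (\<lambda>(a, b). size b))" by simp
next
  fix g ds f and cs :: "hom list list" and i k and d :: hom
  assume i: "i \<in> set [0..<length cs]" and k: "k \<in> set [0..<length (cs ! i)]"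
  have a1: "cs ! i \<in> set cs" using i by simp
  have a2: "cs ! i ! k \<in> set (cs ! i)" using k by simp
  have "size (cs ! i ! k) < size_list size (cs ! i)" using a2 by (rule size_mem_hom_list)
  also have "size_list size (cs ! i) \<le> size_list (size_list size) cs"
    using a1 by (simp add: size_list_estimation')
  finally have "size (cs ! i ! k) < size (H f cs)" by simp
  then show "((d, cs ! i ! k), H g ds, H f cs) \<in> measure (\<lambda>(a, b). size b)" by simp
qed

fun idh :: "tree \<Rightarrow> hom" where
  "idh (T xs) = H [0..<Suc (length xs)] (map (\<lambda>x. [idh x]) xs)"

fun bang :: "tree \<Rightarrow> hom" where
  "bang (T xs) = H (replicate (Suc (length xs)) 0) (replicate (length xs) [])"

section \<open>Theta_n-sets (presheaves), given by carriers and actions\<close>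

text \<open>A presheaf X: carrier fst X s, and snd X s t m : X(t) -> X(s) for m : s -> t.\<close>
type_synonym 'a psh = "(tree \<Rightarrow> 'a set) \<times> (tree \<Rightarrow> tree \<Rightarrow> hom \<Rightarrow> 'a \<Rightarrow> 'a)"

definition psh_iso :: "nat \<Rightarrow> 'a psh \<Rightarrow> 'b psh \<Rightarrow> bool" where
  "psh_iso n X Y = (\<exists>\<eta>. (\<forall>s. obj n s \<longrightarrow> bij_betw (\<eta> s) (fst X s) (fst Y s)) \<and>
     (\<forall>s t m x. obj n s \<and> obj n t \<and> ishom s t m \<and> x \<in> fst X t \<longrightarrow>
        \<eta> s (snd X s t m x) = snd Y s t m (\<eta> t x)))"

definition rep :: "tree \<Rightarrow> hom psh" where
  "rep \<theta> = (\<lambda>s. {m. ishom s \<theta> m}, \<lambda>s t m x. comp x m)"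

definition obs :: "tree \<Rightarrow> hom set" where
  "obs \<theta> = {m. ishom (T []) \<theta> m}"

definition prod_psh :: "'a psh \<Rightarrow> 'b psh \<Rightarrow> ('a \<times> 'b) psh" where
  "prod_psh X Y = (\<lambda>s. fst X s \<times> fst Y s, \<lambda>s t m (x, y). (snd X s t m x, snd Y s t m y))"

definition const_psh :: "'a set \<Rightarrow> 'a psh" where
  "const_psh S = (\<lambda>s. S, \<lambda>s t m x. x)"

definition qrel :: "(tree \<Rightarrow> ('a \<times> 'a) set) \<Rightarrow> tree \<Rightarrow> ('a \<times> 'a) set" where
  "qrel R s = (R s \<union> (R s)\<inverse>)\<^sup>*"

definition quot_psh :: "'a psh \<Rightarrow> (tree \<Rightarrow> ('a \<times> 'a) set) \<Rightarrow> 'a set psh" where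
  "quot_psh X R = (\<lambda>s. fst X s // qrel R s,
                   \<lambda>s t m Q. qrel R s `` {snd X s t m (SOME x. x \<in> Q)})"

definition cls :: "'a set psh \<Rightarrow> tree \<Rightarrow> 'a \<Rightarrow> 'a set" where
  "cls P s y = (THE Q. Q \<in> fst P s \<and> y \<in> Q)"

definition sum_psh :: "'a psh \<Rightarrow> 'b psh \<Rightarrow> ('a + 'b) psh" where
  "sum_psh A B = (\<lambda>s. fst A s <+> fst B s,
     \<lambda>s t m. case_sum (\<lambda>a. Inl (snd A s t m a)) (\<lambda>b. Inr (snd B s t m b)))"

definition pushout :: "'a psh \<Rightarrow> 'b psh \<Rightarrow> 'c psh \<Rightarrow> (tree \<Rightarrow> 'c \<Rightarrow> 'a) \<Rightarrow>
    (tree \<Rightarrow> 'c \<Rightarrow> 'b) \<Rightarrow> ('a + 'b) set psh" where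
  "pushout A B C f g = quot_psh (sum_psh A B)
     (\<lambda>s. {(Inl (f s c), Inr (g s c)) | c. c \<in> fst C s})"

section \<open>I, J and the map I -> J\<close>

definition Ic :: tree where "Ic = T [T []]"

definition Ipsh :: "hom psh" where "Ipsh = rep Ic"

text \<open>J = N_n(J_1). Since J_1 (the free groupoid on 0 -> 1, with only identity higher cells)
  has exactly one morphism between any two objects, an n-functor theta -> J_1 is the same as
  a map Ob(theta) -> {0,1}; we encode 0 as False and 1 as True.\<close>
definition Jpsh :: "(hom \<Rightarrow> bool) psh" where
  "Jpsh = (\<lambda>s. obs s \<rightarrow>\<^sub>E (UNIV :: bool set),
           \<lambda>s t m u. restrict (\<lambda>ob. u (comp m ob)) (obs s))"

text \<open>I -> J picks the arrow 0 -> 1: an s-cell x of I is sent to the functor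
  Ob(s) -> {0,1} sending an object o to the object of [1] that x maps it to.\<close>
definition IJ :: "tree \<Rightarrow> hom \<Rightarrow> (hom \<Rightarrow> bool)" where
  "IJ s x = restrict (\<lambda>ob. comp x ob = H [1] []) (obs s)"

section \<open>The Theta_n-set J(theta)\<close>

definition Theta0 :: "tree \<Rightarrow> hom psh" where
  "Theta0 \<theta> = const_psh (obs \<theta>)"

definition JJ :: "tree \<Rightarrow> ((hom \<times> hom) + (hom \<times> (hom \<Rightarrow> bool))) set psh" where
  "JJ \<theta> = pushout (prod_psh (rep \<theta>) Ipsh) (prod_psh (Theta0 \<theta>) Jpsh)
                  (prod_psh (Theta0 \<theta>) Ipsh)
                  (\<lambda>s (ob, x). (comp ob (bang s), x)) (\<lambda>s (ob, x). (ob, IJ s x))"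

section \<open>The Theta_n-set J'(theta)\<close>

definition children :: "tree \<Rightarrow> tree list" where
  "children \<theta> = (case \<theta> of T ts \<Rightarrow> ts)"

definition theta_i :: "tree \<Rightarrow> nat \<Rightarrow> tree" where
  "theta_i \<theta> i = T (take i (children \<theta>) @ [T []] @ drop i (children \<theta>))"

text \<open>The map theta -> theta^i whose underlying map skips sk, with identity components on
  the t_j and the unique map to the inserted [0] (at position i+1).\<close>
definition ins_map :: "tree \<Rightarrow> nat \<Rightarrow> nat \<Rightarrow> hom" where
  "ins_map \<theta> i sk =
    (let ts = children \<theta>; p = length ts; f = (\<lambda>k. if k < sk then k else Suc k) in
     H (map f [0..<Suc p])
       (map (\<lambda>k. map (\<lambda>j. if j = Suc i then bang (ts ! k) else idh (ts ! k))
                      [Suc (f k)..<Suc (f (Suc k))]) [0..<p]))"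

definition alpha :: "tree \<Rightarrow> nat \<Rightarrow> hom" where
  "alpha \<theta> i = ins_map \<theta> i (Suc i)"

definition beta :: "tree \<Rightarrow> nat \<Rightarrow> hom" where
  "beta \<theta> i = ins_map \<theta> i i"

definition e_i :: "nat \<Rightarrow> hom" where
  "e_i i = H [i, Suc i] [[idh (T [])]]"

definition thJ :: "tree \<Rightarrow> nat \<Rightarrow> (hom + (hom \<Rightarrow> bool)) set psh" where
  "thJ \<theta> i = pushout (rep (theta_i \<theta> i)) Jpsh Ipsh (\<lambda>s x. comp (e_i i) x) IJ"

definition phi :: "tree \<Rightarrow> nat \<Rightarrow> tree \<Rightarrow> hom \<Rightarrow> (hom + (hom \<Rightarrow> bool)) set" where
  "phi \<theta> i s y = cls (thJ \<theta> i) s (Inl y)"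

text \<open>Colimit of the zigzag
  theta^0_J <- theta -> theta^1_J <- theta -> ... <- theta -> theta^p_J:
  disjoint union of all vertices (the i-th middle copy of theta tagged (i, Inr _),
  0 <= i < p; theta^i_J tagged (i, Inl _)), modulo the generated equivalence.\<close>
definition Dzig :: "tree \<Rightarrow> (nat \<times> ((hom + (hom \<Rightarrow> bool)) set + hom)) psh" where
  "Dzig \<theta> = (\<lambda>s. {(i, Inl y) | i y. i \<le> length (children \<theta>) \<and> y \<in> fst (thJ \<theta> i) s}
                 \<union> {(i, Inr x) | i x. i < length (children \<theta>) \<and> x \<in> fst (rep \<theta>) s},
     \<lambda>s t m (i, z). (i, case z of Inl y \<Rightarrow> Inl (snd (thJ \<theta> i) s t m y)
                                | Inr x \<Rightarrow> Inr (snd (rep \<theta>) s t m x)))"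

definition Rzig :: "tree \<Rightarrow> tree \<Rightarrow>
    ((nat \<times> ((hom + (hom \<Rightarrow> bool)) set + hom)) \<times> (nat \<times> ((hom + (hom \<Rightarrow> bool)) set + hom))) set" where
  "Rzig \<theta> s =
     {((i, Inr x), (i, Inl (phi \<theta> i s (comp (alpha \<theta> i) x)))) | i x.
        i < length (children \<theta>) \<and> x \<in> fst (rep \<theta>) s}
   \<union> {((i, Inr x), (Suc i, Inl (phi \<theta> (Suc i) s (comp (beta \<theta> (Suc i)) x)))) | i x.
        i < length (children \<theta>) \<and> x \<in> fst (rep \<theta>) s}"

definition JJ' :: "tree \<Rightarrow> (nat \<times> ((hom + (hom \<Rightarrow> bool)) set + hom)) set psh" where
  "JJ' \<theta> = quot_psh (Dzig \<theta>) (Rzig \<theta>)"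

end

theory Submission
  imports Defs
begin


lemma ishom_iff: "ishom (T xs) (T ys) (H f cs) \<longleftrightarrow>
   (length f = Suc (length xs) \<and> (\<forall>k<length f. f ! k \<le> length ys) \<and> sorted f \<and>
     length cs = length xs \<and>
     (\<forall>i<length xs. length (cs ! i) = f ! Suc i - f ! i \<and>
        (\<forall>k<length (cs ! i). ishom (xs ! i) (ys ! (f ! i + k)) (cs ! i ! k))))"
  by (subst ishom.simps) auto

lemma idh_ishom: "ishom t t (idh t)"
proof (induction t)
  case (T xs)
  show ?case
    apply (simp add: ishom_iff nth_append del: upt_Suc)
    using T by (auto simp: nth_append sorted_append)
qed

definition sl :: "'a list \<Rightarrow> nat \<Rightarrow> nat \<Rightarrow> 'a list" where
  "sl xs a b = map (\<lambda>k. xs ! (a + k)) [0..<b - a]"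

lemma length_sl[simp]: "length (sl xs a b) = b - a" by (simp add: sl_def)
lemma nth_sl[simp]: "k < b - a \<Longrightarrow> sl xs a b ! k = xs ! (a + k)" by (simp add: sl_def)
lemma sl_empty[simp]: "b \<le> a \<Longrightarrow> sl xs a b = []" by (simp add: sl_def)
lemma sl_map: "b \<le> length xs \<Longrightarrow> sl (map F xs) a b = map F (sl xs a b)"
  by (auto simp: sl_def)

lemma sl_append: "a \<le> b \<Longrightarrow> b \<le> c \<Longrightarrow> sl xs a c = sl xs a b @ sl xs b c"
  by (rule nth_equalityI) (auto simp: nth_append ac_simps)

lemma list_all2_concat:
  "list_all2 (list_all2 P) xss yss \<Longrightarrow> list_all2 P (concat xss) (concat yss)"
  by (induction xss yss rule: list_all2_induct) (auto intro: list_all2_appendI)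

lemma map2_concat:
  "list_all2 (\<lambda>x y. length x = length y) xss yss \<Longrightarrow>
   map2 F (concat xss) (concat yss) = concat (map2 (map2 F) xss yss)"
  by (induction xss yss rule: list_all2_induct) auto

lemma sl_concat:
  assumes "sorted g" "a \<le> b" "b < length g"
  shows "sl zs (g ! a) (g ! b) = concat (map (\<lambda>j. sl zs (g ! j) (g ! Suc j)) [a..<b])"
  using assms
proof (induction b)
  case 0 then show ?case by simp
next
  case (Suc b)
  show ?case
  proof (cases "a = Suc b")
    case True then show ?thesis by simp
  next
    case False
    then have ab: "a \<le> b" using Suc by simp
    have m: "g ! a \<le> g ! b" "g ! b \<le> g ! Suc b" using Suc ab by (auto simp: sorted_iff_nth_mono)
    have "sl zs (g ! a) (g ! Suc b) = sl zs (g ! a) (g ! b) @ sl zs (g ! b) (g ! Suc b)"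
      using m by (rule sl_append)
    then show ?thesis using Suc ab by simp
  qed
qed


lemma ishom_iff2: "ishom (T xs) (T ys) (H f cs) \<longleftrightarrow>
   (length f = Suc (length xs) \<and> (\<forall>k<length f. f ! k \<le> length ys) \<and> sorted f \<and>
     length cs = length xs \<and>
     (\<forall>i<length xs. list_all2 (ishom (xs ! i)) (sl ys (f ! i) (f ! Suc i)) (cs ! i)))"
  unfolding ishom_iff list_all2_conv_all_nth by auto

lemma comp_sl: 
  shows "comp (H g ds) (H f cs) = H (map ((!) g) f)
    (map (\<lambda>i. concat (map2 (\<lambda>c D. map (\<lambda>d. comp d c) D) (cs ! i) (sl ds (f ! i) (f ! i + length (cs ! i))))) [0..<length cs])"
proof -
  have "map (\<lambda>k. map (\<lambda>d. comp d (cs ! i ! k)) (ds ! (f ! i + k))) [0..<length (cs ! i)]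
     = map2 (\<lambda>c D. map (\<lambda>d. comp d c) D) (cs ! i) (sl ds (f ! i) (f ! i + length (cs ! i)))" for i
    by (rule nth_equalityI) auto
  then show ?thesis by simp
qed

declare comp.simps[simp del]


lemma ishom_sorted_le: "ishom (T xs) (T ys) (H f cs) \<Longrightarrow> i \<le> j \<Longrightarrow> j \<le> length xs \<Longrightarrow> f ! i \<le> f ! j"
  by (auto simp: ishom_iff sorted_iff_nth_mono)

lemma comp_ishom: "ishom a b m1 \<Longrightarrow> ishom b c m2 \<Longrightarrow> ishom a c (comp m2 m1)"
proof (induction a b m1 arbitrary: c m2 rule: ishom.induct)
  case (1 f xs ys cs)
  obtain zs where c: "c = T zs" by (cases c)
  obtain g ds where m2: "m2 = H g ds" by (cases m2)
  have h1: "ishom (T xs) (T ys) (H f cs)" using 1(1-5) by (auto simp: ishom_iff)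
  have h2: "ishom (T ys) (T zs) (H g ds)" using 1(6) c m2 by simp
  note h2' = h2[unfolded ishom_iff2]
  have ci: "list_all2 (ishom (xs ! i)) (sl zs (g ! (f ! i)) (g ! (f ! Suc i)))
      (concat (map2 (\<lambda>c D. map (\<lambda>d. comp d c) D) (cs ! i) (sl ds (f ! i) (f ! i + length (cs ! i)))))"
    if i: "i < length xs" for i
  proof -
    define a where "a = f ! i"
    define b where "b = f ! Suc i"
    have ab: "a \<le> b" "b \<le> length ys" "length (cs ! i) = b - a"
      using ishom_sorted_le[OF h1, of i "Suc i"] i 1(1-5) unfolding a_def b_def by auto
    have gl: "b < length g" using ab h2' by simp
    have eq: "sl zs (g ! a) (g ! b) = concat (map (\<lambda>j. sl zs (g ! j) (g ! Suc j)) [a..<b])"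
      using sl_concat[of g a b zs] ab gl h2' by simp
    have "list_all2 (list_all2 (ishom (xs ! i))) (map (\<lambda>j. sl zs (g ! j) (g ! Suc j)) [a..<b])
       (map2 (\<lambda>c D. map (\<lambda>d. comp d c) D) (cs ! i) (sl ds a b))"
    proof (rule list_all2_all_nthI)
      fix k assume k: "k < length (map (\<lambda>j. sl zs (g ! j) (g ! Suc j)) [a..<b])"
      then have k': "k < b - a" by simp
      have d: "list_all2 (ishom (ys ! (a + k))) (sl zs (g ! (a + k)) (g ! Suc (a + k))) (ds ! (a + k))"
        using h2' k' ab by auto
      have IH: "ishom (ys ! (a + k)) c' m' \<Longrightarrow> ishom (xs ! i) c' (comp m' (cs ! i ! k))" for c' m'
        using 1(5) i k' ab unfolding a_def by auto
      show "list_all2 (ishom (xs ! i)) (map (\<lambda>j. sl zs (g ! j) (g ! Suc j)) [a..<b] ! k)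
          (map2 (\<lambda>c D. map (\<lambda>d. comp d c) D) (cs ! i) (sl ds a b) ! k)"
        using k' ab d IH by (auto simp: list_all2_map2 elim: list_all2_mono)
    qed (use ab in simp)
    then show ?thesis using eq ab unfolding a_def b_def by (auto intro: list_all2_concat)
  qed
  show ?case unfolding c m2 comp_sl ishom_iff2
    using h1 h2 ci by (auto simp: ishom_iff sorted_iff_nth_mono)
qed

lemma comp_len: "ishom (T xs) (T ys) (H f cs) \<Longrightarrow> ishom (T ys) (T zs) (H g ds) \<Longrightarrow> i < length xs \<Longrightarrow>
  length (concat (map2 (\<lambda>c D. map (\<lambda>d. comp d c) D) (cs ! i) (sl ds (f ! i) (f ! i + length (cs ! i)))))
   = g ! (f ! Suc i) - g ! (f ! i)"
proof -
  assume a: "ishom (T xs) (T ys) (H f cs)" "ishom (T ys) (T zs) (H g ds)" "i < length xs"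
  have "ishom (T xs) (T zs) (comp (H g ds) (H f cs))" using comp_ishom a by blast
  then show ?thesis using a(3) by (auto simp: comp_sl ishom_iff)
qed

lemma concat_concat: "concat (map concat xss) = concat (concat xss)"
  by (induct xss) auto

lemma set_list_all2_ex: "list_all2 P xs ys \<Longrightarrow> y \<in> set ys \<Longrightarrow> \<exists>x. P x y"
  by (metis in_set_conv_nth list_all2_conv_all_nth)

lemma comp_assoc: "ishom a b m1 \<Longrightarrow> ishom b c m2 \<Longrightarrow> ishom c d m3 \<Longrightarrow>
   comp m3 (comp m2 m1) = comp (comp m3 m2) m1"
proof (induction a b m1 arbitrary: c d m2 m3 rule: ishom.induct)
  case (1 f xs ys cs)
  obtain zs where c: "c = T zs" by (cases c)
  obtain g ds where m2: "m2 = H g ds" by (cases m2)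
  obtain ws where d: "d = T ws" by (cases d)
  obtain h es where m3: "m3 = H h es" by (cases m3)
  have h1: "ishom (T xs) (T ys) (H f cs)" using 1(1-5) by (auto simp: ishom_iff)
  have h2: "ishom (T ys) (T zs) (H g ds)" using 1(6) c m2 by simp
  have h3: "ishom (T zs) (T ws) (H h es)" using 1(7) c d m3 by simp
  note h1' = h1[unfolded ishom_iff2] and h2' = h2[unfolded ishom_iff2] and h3' = h3[unfolded ishom_iff2]
  define F :: "hom \<Rightarrow> hom list \<Rightarrow> hom list" where "F = (\<lambda>c D. map (\<lambda>d. comp d c) D)"
  define CS where "CS = map (\<lambda>i. concat (map2 F (cs ! i) (sl ds (f ! i) (f ! i + length (cs ! i))))) [0..<length cs]"
  define DS where "DS = map (\<lambda>j. concat (map2 F (ds ! j) (sl es (g ! j) (g ! j + length (ds ! j))))) [0..<length ds]"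
  have L: "comp m3 (comp m2 (H f cs)) = H (map ((!) h) (map ((!) g) f))
      (map (\<lambda>i. concat (map2 F (CS ! i) (sl es (map ((!) g) f ! i) (map ((!) g) f ! i + length (CS ! i))))) [0..<length CS])"
    unfolding m2 m3 comp_sl F_def CS_def by simp
  have R: "comp (comp m3 m2) (H f cs) = H (map ((!) (map ((!) h) g)) f)
      (map (\<lambda>i. concat (map2 F (cs ! i) (sl DS (f ! i) (f ! i + length (cs ! i))))) [0..<length cs])"
    unfolding m2 m3 comp_sl F_def DS_def by simp
  have und: "map ((!) h) (map ((!) g) f) = map ((!) (map ((!) h) g)) f"
    using h1' h2' by (intro nth_equalityI) (auto simp: less_Suc_eq_le)
  have comps: "concat (map2 F (CS ! i) (sl es (map ((!) g) f ! i) (map ((!) g) f ! i + length (CS ! i))))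
     = concat (map2 F (cs ! i) (sl DS (f ! i) (f ! i + length (cs ! i))))" if i: "i < length xs" for i
  proof -
    define a where "a = f ! i"
    define b where "b = f ! Suc i"
    have ab: "a \<le> b" "b \<le> length ys" "length (cs ! i) = b - a"
      using ishom_sorted_le[OF h1, of i "Suc i"] i 1(1-5) unfolding a_def b_def by auto
    have gl: "b < length g" "length g = Suc (length ys)" using ab h2' by auto
    have CSi: "CS ! i = concat (map2 F (cs ! i) (sl ds a b))"
      unfolding CS_def using i 1(4) ab unfolding a_def b_def by simp
    have lenCS: "length (CS ! i) = g ! b - g ! a"
      using comp_len[OF h1 h2 i] unfolding CS_def F_def a_def b_def using i 1(4) by simp
    have ga: "map ((!) g) f ! i = g ! a" using i 1(1) unfolding a_def by simp
    have gab: "g ! a \<le> g ! b" using h2' ab gl by (auto simp: sorted_iff_nth_mono)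
    have eq: "sl es (g ! a) (g ! b) = concat (map (\<lambda>j. sl es (g ! j) (g ! Suc j)) [a..<b])"
      using sl_concat[of g a b es] ab gl h2' by simp
    define X where "X = map2 F (cs ! i) (sl ds a b)"
    define Y where "Y = map (\<lambda>j. sl es (g ! j) (g ! Suc j)) [a..<b]"
    have dsl: "length (ds ! j) = g ! Suc j - g ! j" if "j < length ys" for j
    proof -
      have "list_all2 (ishom (ys ! j)) (sl zs (g ! j) (g ! Suc j)) (ds ! j)" using h2' that by auto
      from list_all2_lengthD[OF this] show ?thesis by simp
    qed
    have XY: "list_all2 (\<lambda>x y. length x = length y) X Y"
      unfolding X_def Y_def using ab dsl by (auto simp: list_all2_conv_all_nth F_def)
    have LHS: "concat (map2 F (CS ! i) (sl es (map ((!) g) f ! i) (map ((!) g) f ! i + length (CS ! i))))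
        = concat (map concat (map2 (map2 F) X Y))"
      using ga lenCS gab CSi eq map2_concat[OF XY, of F] unfolding X_def Y_def
      by (simp add: concat_concat[symmetric])
    have inner: "map concat (map2 (map2 F) X Y) = map2 F (cs ! i) (sl DS a b)"
    proof (rule nth_equalityI)
      show "length (map concat (map2 (map2 F) X Y)) = length (map2 F (cs ! i) (sl DS a b))"
        unfolding X_def Y_def using ab by simp
    next
      fix k assume "k < length (map concat (map2 (map2 F) X Y))"
      then have k: "k < b - a" unfolding X_def Y_def using ab by simp
      define j where "j = a + k"
      have j: "j < length ys" using k ab unfolding j_def by simp
      have ck: "ishom (xs ! i) (ys ! j) (cs ! i ! k)" using 1(5) i k ab unfolding j_def a_def by auto
      have IH: "ishom (ys ! j) c' m2' \<Longrightarrow> ishom c' d' m3' \<Longrightarrow>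
          comp m3' (comp m2' (cs ! i ! k)) = comp (comp m3' m2') (cs ! i ! k)" for c' d' m2' m3'
        using 1(5) i k ab unfolding j_def a_def by auto
      have dj: "list_all2 (ishom (ys ! j)) (sl zs (g ! j) (g ! Suc j)) (ds ! j)" using h2' j by auto
      have gj: "g ! j \<le> g ! Suc j" using h2' j gl by (auto simp: sorted_iff_nth_mono)
      have DSj: "DS ! j = concat (map2 F (ds ! j) (sl es (g ! j) (g ! Suc j)))"
        unfolding DS_def using j h2' dsl[OF j] gj by simp
      have "concat (map2 F (map (\<lambda>d. comp d (cs ! i ! k)) (ds ! j)) (sl es (g ! j) (g ! Suc j)))
          = map (\<lambda>d'. comp d' (cs ! i ! k)) (concat (map2 F (ds ! j) (sl es (g ! j) (g ! Suc j))))"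
        unfolding map_concat
      proof (rule arg_cong[where f=concat], rule nth_equalityI)
        fix l assume "l < length (map2 F (map (\<lambda>d. comp d (cs ! i ! k)) (ds ! j)) (sl es (g ! j) (g ! Suc j)))"
        then have l: "l < length (ds ! j)" "l < g ! Suc j - g ! j" by auto
        have dl: "ishom (ys ! j) (zs ! (g ! j + l)) (ds ! j ! l)"
          using dj l by (auto simp: list_all2_conv_all_nth)
        have "g ! Suc j \<le> length zs" using h2' j gl by auto
        then have gjl: "g ! j + l < length zs" using l(2) by linarith
        have el: "list_all2 (ishom (zs ! (g ! j + l))) (sl ws (h ! (g ! j + l)) (h ! Suc (g ! j + l))) (es ! (g ! j + l))"
          using h3' gjl by auto
        show "map2 F (map (\<lambda>d. comp d (cs ! i ! k)) (ds ! j)) (sl es (g ! j) (g ! Suc j)) ! l =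
            map (map (\<lambda>d'. comp d' (cs ! i ! k))) (map2 F (ds ! j) (sl es (g ! j) (g ! Suc j))) ! l"
        proof -
          have allE: "\<forall>e\<in>set (es ! (g ! j + l)). comp e (comp (ds ! j ! l) (cs ! i ! k)) = comp (comp e (ds ! j ! l)) (cs ! i ! k)"
            using set_list_all2_ex[OF el] IH[OF dl] by blast
          show ?thesis using l allE by (auto simp: F_def)
        qed
      qed (simp add: dsl[OF j])
      then show "map concat (map2 (map2 F) X Y) ! k = map2 F (cs ! i) (sl DS a b) ! k"
        using k DSj ab unfolding X_def Y_def j_def by (simp add: F_def)
    qed
    show ?thesis using LHS inner ab unfolding a_def b_def by simp
  qed
  show ?case unfolding L R using und comps 1(4) h1' by (auto simp: CS_def)
qed

lemma comp_idh_left: "ishom s t m \<Longrightarrow> comp (idh t) m = m"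
proof (induction s t m rule: ishom.induct)
  case (1 f xs ys cs)
  have comps: "concat (map2 (\<lambda>c D. map (\<lambda>d. comp d c) D) (cs ! i) (sl (map (\<lambda>x. [idh x]) ys) (f ! i) (f ! i + length (cs ! i)))) = cs ! i"
    if i: "i < length xs" for i
  proof -
    have "f ! i \<le> f ! Suc i" "f ! Suc i \<le> length ys" using 1(1-3) i by (auto simp: sorted_iff_nth_mono)
    then have le: "f ! i + length (cs ! i) \<le> length ys" using 1(5) i by auto
    have "map2 (\<lambda>c D. map (\<lambda>d. comp d c) D) (cs ! i) (sl (map (\<lambda>x. [idh x]) ys) (f ! i) (f ! i + length (cs ! i)))
        = map (\<lambda>c. [c]) (cs ! i)"
    proof (rule nth_equalityI)
      fix k assume "k < length (map2 (\<lambda>c D. map (\<lambda>d. comp d c) D) (cs ! i) (sl (map (\<lambda>x. [idh x]) ys) (f ! i) (f ! i + length (cs ! i))))"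
      then have k: "k < length (cs ! i)" by simp
      then show "map2 (\<lambda>c D. map (\<lambda>d. comp d c) D) (cs ! i) (sl (map (\<lambda>x. [idh x]) ys) (f ! i) (f ! i + length (cs ! i))) ! k = map (\<lambda>c. [c]) (cs ! i) ! k"
        using 1(5) i le by auto
    qed simp
    then show ?thesis by (simp add: concat_map_singleton)
  qed
  have und: "map ((!) [0..<Suc (length ys)]) f = f"
    using 1(1,2) by (intro nth_equalityI) (auto simp: nth_upt less_Suc_eq_le simp del: upt_Suc)
  show ?case using comps und 1(4) by (simp add: comp_sl del: upt_Suc) (intro nth_equalityI, auto)
qed

lemma bang_ishom: "ishom s (T []) (bang s)"
  by (cases s) (simp add: ishom_iff nth_Cons' del: replicate_Suc)

lemma ishom_bang_unique: "ishom s (T []) m \<Longrightarrow> m = bang s"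
proof -
  assume a: "ishom s (T []) m"
  obtain xs where s: "s = T xs" by (cases s)
  obtain f cs where m: "m = H f cs" by (cases m)
  have "f = replicate (Suc (length xs)) 0" using a unfolding s m ishom_iff
    by (intro nth_equalityI) (auto simp del: replicate_Suc)
  moreover have "cs = replicate (length xs) []" using a unfolding s m ishom_iff
    by (intro nth_equalityI) auto
  ultimately show ?thesis using s m by simp
qed

lemma comp_bang: "ishom s t m \<Longrightarrow> comp (bang t) m = bang s"
  using comp_ishom[OF _ bang_ishom] ishom_bang_unique by blast

lemma ishom_obj: "ishom (T []) (T ys) m \<longleftrightarrow> (\<exists>k\<le>length ys. m = H [k] [])"
proof
  assume a: "ishom (T []) (T ys) m"
  obtain f cs where m: "m = H f cs" by (cases m)
  have "length f = 1" "cs = []" "f ! 0 \<le> length ys" using a unfolding m ishom_iff by auto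
  then show "\<exists>k\<le>length ys. m = H [k] []" using m
    by (metis One_nat_def length_0_conv length_Suc_conv nth_Cons_0)
qed (auto simp: ishom_iff)

lemma comp_obj: "comp (H g ds) (H [k] []) = H [g ! k] []"
  by (simp add: comp_sl)



definition closed :: "'a psh \<Rightarrow> bool" where
  "closed X = (\<forall>s t m a. ishom s t m \<and> a \<in> fst X t \<longrightarrow> snd X s t m a \<in> fst X s)"

definition natural :: "'a psh \<Rightarrow> 'b psh \<Rightarrow> (tree \<Rightarrow> 'a \<Rightarrow> 'b) \<Rightarrow> bool" where
  "natural X Y \<Phi> = (\<forall>s t m a. ishom s t m \<and> a \<in> fst X t \<longrightarrow> \<Phi> s (snd X s t m a) = snd Y s t m (\<Phi> t a))"

definition isoP :: "'a psh \<Rightarrow> 'b psh \<Rightarrow> (tree \<Rightarrow> 'a \<Rightarrow> 'b) \<Rightarrow> bool" where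
  "isoP X Y \<eta> = ((\<forall>s. bij_betw (\<eta> s) (fst X s) (fst Y s)) \<and> natural X Y \<eta>)"

lemma isoP_psh_iso: "isoP X Y \<eta> \<Longrightarrow> psh_iso n X Y"
  unfolding isoP_def psh_iso_def natural_def by blast

lemma isoP_trans_inv:
  assumes A: "isoP A M \<eta>1" and B: "isoP B M \<eta>2" and cB: "closed B"
  shows "isoP A B (\<lambda>s a. inv_into (fst B s) (\<eta>2 s) (\<eta>1 s a))"
  unfolding isoP_def
proof (intro conjI allI)
  fix s
  show "bij_betw (\<lambda>a. inv_into (fst B s) (\<eta>2 s) (\<eta>1 s a)) (fst A s) (fst B s)"
  proof -
    have "bij_betw (\<eta>1 s) (fst A s) (fst M s)" "bij_betw (\<eta>2 s) (fst B s) (fst M s)"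
      using A B unfolding isoP_def by auto
    then have "bij_betw (inv_into (fst B s) (\<eta>2 s) o \<eta>1 s) (fst A s) (fst B s)"
      using bij_betw_inv_into bij_betw_trans by blast
    then show ?thesis by (simp add: o_def)
  qed
next
  show "natural A B (\<lambda>s a. inv_into (fst B s) (\<eta>2 s) (\<eta>1 s a))"
    unfolding natural_def
  proof (intro allI impI)
    fix s t m a assume h: "ishom s t m \<and> a \<in> fst A t"
    have b1: "bij_betw (\<eta>1 t) (fst A t) (fst M t)" and b2: "bij_betw (\<eta>2 t) (fst B t) (fst M t)"
      and b2s: "bij_betw (\<eta>2 s) (fst B s) (fst M s)"
      using A B unfolding isoP_def by auto
    define b where "b = inv_into (fst B t) (\<eta>2 t) (\<eta>1 t a)"
    have am: "\<eta>1 t a \<in> \<eta>2 t ` fst B t" using b1 b2 h by (auto simp: bij_betw_def)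
    have bB: "b \<in> fst B t" and eb: "\<eta>2 t b = \<eta>1 t a"
      using inv_into_into[OF am] f_inv_into_f[OF am] unfolding b_def by auto
    have "\<eta>1 s (snd A s t m a) = snd M s t m (\<eta>1 t a)" using A h unfolding isoP_def natural_def by blast
    also have "\<dots> = snd M s t m (\<eta>2 t b)" using eb by simp
    also have "\<dots> = \<eta>2 s (snd B s t m b)" using B h bB unfolding isoP_def natural_def by metis
    finally have e: "\<eta>1 s (snd A s t m a) = \<eta>2 s (snd B s t m b)" .
    have "snd B s t m b \<in> fst B s" using cB h bB unfolding closed_def by blast
    then show "inv_into (fst B s) (\<eta>2 s) (\<eta>1 s (snd A s t m a)) = snd B s t m (inv_into (fst B t) (\<eta>2 t) (\<eta>1 t a))"
      using e b2s unfolding b_def[symmetric] by (simp add: bij_betw_def inv_into_f_f)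
  qed
qed

lemma qrel_refl[simp]: "(a, a) \<in> qrel R s" by (simp add: qrel_def)
lemma qrel_sym: "(a, b) \<in> qrel R s \<Longrightarrow> (b, a) \<in> qrel R s"
  unfolding qrel_def by (metis converse_Un converse_converse rtrancl_converseI sup_commute)
lemma qrel_trans: "(a, b) \<in> qrel R s \<Longrightarrow> (b, c) \<in> qrel R s \<Longrightarrow> (a, c) \<in> qrel R s"
  unfolding qrel_def by auto
lemma qrel_base: "(a, b) \<in> R s \<Longrightarrow> (a, b) \<in> qrel R s"
  unfolding qrel_def by auto
lemma qrel_base': "(a, b) \<in> R s \<Longrightarrow> (b, a) \<in> qrel R s"
  unfolding qrel_def by auto

lemma qrel_const:
  assumes "\<And>a b. (a, b) \<in> R s \<Longrightarrow> \<Phi> a = \<Phi> b" and "(a, b) \<in> qrel R s"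
  shows "\<Phi> a = \<Phi> b"
  using assms(2) unfolding qrel_def
proof (induction rule: rtrancl_induct)
  case (step y z) then show ?case using assms(1) by auto
qed simp

lemma qrel_carrier:
  assumes "\<And>a b. (a, b) \<in> R s \<Longrightarrow> a \<in> A \<and> b \<in> A" and "(a, b) \<in> qrel R s" and "a \<in> A"
  shows "b \<in> A"
  using assms(2,3) unfolding qrel_def
proof (induction rule: rtrancl_induct)
  case (step y z) then show ?case using assms(1) by auto
qed simp

lemma qrel_class_eq: "(a, b) \<in> qrel R s \<Longrightarrow> qrel R s `` {a} = qrel R s `` {b}"
  by (auto intro: qrel_trans qrel_sym)

definition RX :: "'a psh \<Rightarrow> (tree \<Rightarrow> ('a \<times> 'a) set) \<Rightarrow> bool" where
  "RX X R = (\<forall>s a b. (a, b) \<in> R s \<longrightarrow> a \<in> fst X s \<and> b \<in> fst X s)"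

lemma quot_carrier: "fst (quot_psh X R) s = fst X s // qrel R s"
  by (simp add: quot_psh_def)

lemma quot_act: "snd (quot_psh X R) s t m Q = qrel R s `` {snd X s t m (SOME x. x \<in> Q)}"
  by (simp add: quot_psh_def)

lemma class_in: "a \<in> fst X s \<Longrightarrow> qrel R s `` {a} \<in> fst (quot_psh X R) s"
  by (simp add: quot_carrier quotientI)

lemma quot_elem:
  assumes "RX X R" "Q \<in> fst (quot_psh X R) s"
  obtains a where "a \<in> fst X s" "Q = qrel R s `` {a}"
  using assms by (auto simp: quot_carrier quotient_def)

lemma some_in_class:
  assumes "RX X R" "a \<in> fst X s"
  shows "(SOME x. x \<in> qrel R s `` {a}) \<in> fst X s \<and> (a, SOME x. x \<in> qrel R s `` {a}) \<in> qrel R s"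
proof -
  have "a \<in> qrel R s `` {a}" by simp
  then have "(SOME x. x \<in> qrel R s `` {a}) \<in> qrel R s `` {a}" by (rule someI)
  then have h: "(a, SOME x. x \<in> qrel R s `` {a}) \<in> qrel R s" by simp
  moreover have "(SOME x. x \<in> qrel R s `` {a}) \<in> fst X s"
    by (rule qrel_carrier[OF _ h assms(2)]) (use assms(1) in \<open>auto simp: RX_def\<close>)
  ultimately show ?thesis by simp
qed

lemma cls_eq:
  assumes "RX X R" "a \<in> fst X s"
  shows "cls (quot_psh X R) s a = qrel R s `` {a}"
  unfolding cls_def
proof (rule the_equality)
  show "qrel R s `` {a} \<in> fst (quot_psh X R) s \<and> a \<in> qrel R s `` {a}"
    using class_in[OF assms(2)] by simp
next
  fix Q assume "Q \<in> fst (quot_psh X R) s \<and> a \<in> Q"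
  then obtain b where "Q = qrel R s `` {b}" "a \<in> Q" using quot_elem[OF assms(1)] by metis
  then show "Q = qrel R s `` {a}" using qrel_class_eq by fastforce
qed

lemma quot_closed:
  assumes "RX X R" "closed X"
  shows "closed (quot_psh X R)"
  unfolding closed_def
proof (intro allI impI)
  fix s t m Q assume h: "ishom s t m \<and> Q \<in> fst (quot_psh X R) t"
  then obtain a where a: "a \<in> fst X t" "Q = qrel R t `` {a}" using quot_elem[OF assms(1)] by metis
  have "(SOME x. x \<in> Q) \<in> fst X t" using some_in_class[OF assms(1) a(1)] a(2) by simp
  then show "snd (quot_psh X R) s t m Q \<in> fst (quot_psh X R) s"
    using assms(2) h unfolding quot_act closed_def by (blast intro: class_in)
qed

definition qmap :: "(tree \<Rightarrow> 'a \<Rightarrow> 'b) \<Rightarrow> tree \<Rightarrow> 'a set \<Rightarrow> 'b" where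
  "qmap \<Phi> s Q = \<Phi> s (SOME a. a \<in> Q)"

definition resp :: "(tree \<Rightarrow> ('a \<times> 'a) set) \<Rightarrow> (tree \<Rightarrow> 'a \<Rightarrow> 'b) \<Rightarrow> bool" where
  "resp R \<Phi> = (\<forall>s a b. (a, b) \<in> R s \<longrightarrow> \<Phi> s a = \<Phi> s b)"

lemma qmap_class:
  assumes "RX X R" "resp R \<Phi>" "a \<in> fst X s"
  shows "qmap \<Phi> s (qrel R s `` {a}) = \<Phi> s a"
  unfolding qmap_def
  using some_in_class[OF assms(1,3)] qrel_const[of R s "\<Phi> s"] assms(2) unfolding resp_def
  by metis

lemma qmap_natural:
  assumes "RX X R" "resp R \<Phi>" "closed X" "natural X Y \<Phi>"
  shows "natural (quot_psh X R) Y (qmap \<Phi>)"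
  unfolding natural_def
proof (intro allI impI)
  fix s t m Q assume h: "ishom s t m \<and> Q \<in> fst (quot_psh X R) t"
  then obtain a where a: "a \<in> fst X t" "Q = qrel R t `` {a}" using quot_elem[OF assms(1)] by metis
  define b where "b = (SOME x. x \<in> Q)"
  have b: "b \<in> fst X t" "(a, b) \<in> qrel R t" using some_in_class[OF assms(1) a(1)] a(2) b_def by auto
  have Qb: "Q = qrel R t `` {b}" using a(2) qrel_class_eq[OF b(2)] by simp
  have sb: "snd X s t m b \<in> fst X s" using assms(3) h b unfolding closed_def by blast
  have "qmap \<Phi> s (snd (quot_psh X R) s t m Q) = \<Phi> s (snd X s t m b)"
    unfolding quot_act b_def[symmetric] using qmap_class[OF assms(1,2) sb] .
  also have "\<dots> = snd Y s t m (\<Phi> t b)" using assms(4) h b unfolding natural_def by blast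
  also have "\<Phi> t b = qmap \<Phi> t Q" using qmap_class[OF assms(1,2) b(1)] Qb by simp
  finally show "qmap \<Phi> s (snd (quot_psh X R) s t m Q) = snd Y s t m (qmap \<Phi> t Q)" .
qed

lemma quot_isoP:
  assumes "RX X R" "resp R \<Phi>" "closed X" "natural X Y \<Phi>"
    and surj: "\<And>s. \<Phi> s ` fst X s = fst Y s"
    and inj: "\<And>s a b. a \<in> fst X s \<Longrightarrow> b \<in> fst X s \<Longrightarrow> \<Phi> s a = \<Phi> s b \<Longrightarrow> (a, b) \<in> qrel R s"
  shows "isoP (quot_psh X R) Y (qmap \<Phi>)"
  unfolding isoP_def
proof (intro conjI allI)
  show "natural (quot_psh X R) Y (qmap \<Phi>)" using qmap_natural assms(1-4) .
next
  fix s
  show "bij_betw (qmap \<Phi> s) (fst (quot_psh X R) s) (fst Y s)"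
    unfolding bij_betw_def
  proof
    show "inj_on (qmap \<Phi> s) (fst (quot_psh X R) s)"
    proof (rule inj_onI)
      fix P Q assume P: "P \<in> fst (quot_psh X R) s" and Q: "Q \<in> fst (quot_psh X R) s"
        and e: "qmap \<Phi> s P = qmap \<Phi> s Q"
      obtain a where a: "a \<in> fst X s" "P = qrel R s `` {a}" using quot_elem[OF assms(1) P] by metis
      obtain b where b: "b \<in> fst X s" "Q = qrel R s `` {b}" using quot_elem[OF assms(1) Q] by metis
      have "\<Phi> s a = \<Phi> s b" using e qmap_class[OF assms(1,2) a(1)] qmap_class[OF assms(1,2) b(1)] a b by simp
      then show "P = Q" using inj[OF a(1) b(1)] a b qrel_class_eq by metis
    qed
  next
    show "qmap \<Phi> s ` fst (quot_psh X R) s = fst Y s"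
    proof
      show "qmap \<Phi> s ` fst (quot_psh X R) s \<subseteq> fst Y s"
      proof
        fix y assume "y \<in> qmap \<Phi> s ` fst (quot_psh X R) s"
        then obtain Q where Q: "Q \<in> fst (quot_psh X R) s" "y = qmap \<Phi> s Q" by blast
        obtain a where a: "a \<in> fst X s" "Q = qrel R s `` {a}" using quot_elem[OF assms(1) Q(1)] by metis
        have "y = \<Phi> s a" using Q(2) a qmap_class[OF assms(1,2) a(1)] by simp
        then show "y \<in> fst Y s" using surj a(1) by blast
      qed
      show "fst Y s \<subseteq> qmap \<Phi> s ` fst (quot_psh X R) s"
      proof
        fix y assume "y \<in> fst Y s"
        then obtain a where "a \<in> fst X s" "y = \<Phi> s a" using surj by blast
        then show "y \<in> qmap \<Phi> s ` fst (quot_psh X R) s"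
          using qmap_class[OF assms(1,2) \<open>a \<in> fst X s\<close>] class_in[OF \<open>a \<in> fst X s\<close>, of R] by (metis image_eqI)
      qed
    qed
  qed
qed



fun und :: "hom \<Rightarrow> nat list" where "und (H f cs) = f"
fun cps :: "hom \<Rightarrow> hom list list" where "cps (H f cs) = cs"
definition cell :: "hom \<Rightarrow> nat \<Rightarrow> nat \<Rightarrow> hom" where
  "cell m k j = cps m ! k ! (j - und m ! k)"

definition mkH :: "nat list \<Rightarrow> nat \<Rightarrow> (nat \<Rightarrow> nat \<Rightarrow> hom) \<Rightarrow> hom" where
  "mkH h n C = H h (map (\<lambda>k. map (C k) [h ! k..<h ! Suc k]) [0..<n])"

lemma und_mkH[simp]: "und (mkH h n C) = h" by (simp add: mkH_def)

lemma cell_mkH: "k < n \<Longrightarrow> h ! k \<le> j \<Longrightarrow> j < h ! Suc k \<Longrightarrow> cell (mkH h n C) k j = C k j"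
  by (simp add: mkH_def cell_def)

lemma ishom_mkH:
  assumes "length h = Suc (length xs)" "\<forall>k<length h. h ! k \<le> length ys" "sorted h"
    "\<And>k j. k < length xs \<Longrightarrow> h ! k \<le> j \<Longrightarrow> j < h ! Suc k \<Longrightarrow> ishom (xs ! k) (ys ! j) (C k j)"
  shows "ishom (T xs) (T ys) (mkH h (length xs) C)"
  unfolding mkH_def ishom_iff using assms by auto

lemma ishom_cell:
  assumes "ishom (T xs) (T ys) m" "k < length xs" "und m ! k \<le> j" "j < und m ! Suc k"
  shows "ishom (xs ! k) (ys ! j) (cell m k j)"
proof -
  obtain f cs where m: "m = H f cs" by (cases m)
  show ?thesis using assms unfolding m ishom_iff cell_def
    by (auto, metis add_diff_inverse_nat diff_less_mono not_le)
qed

lemma ishom_und: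
  assumes "ishom (T xs) (T ys) m"
  shows "length (und m) = Suc (length xs)" "\<forall>k<length (und m). und m ! k \<le> length ys" "sorted (und m)"
  using assms by (cases m, simp add: ishom_iff)+

lemma hom_ext:
  assumes "ishom (T xs) Y m1" "ishom (T xs) Y m2" "und m1 = und m2"
    "\<And>k j. k < length xs \<Longrightarrow> und m1 ! k \<le> j \<Longrightarrow> j < und m1 ! Suc k \<Longrightarrow> cell m1 k j = cell m2 k j"
  shows "m1 = m2"
proof -
  obtain ys where Y: "Y = T ys" by (cases Y)
  obtain f cs where m1: "m1 = H f cs" by (cases m1)
  obtain f' cs' where m2: "m2 = H f' cs'" by (cases m2)
  have f: "f = f'" using assms(3) m1 m2 by simp
  have h1: "ishom (T xs) (T ys) (H f cs)" and h2: "ishom (T xs) (T ys) (H f cs')" using assms(1,2) Y m1 m2 f by auto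
  have "cs = cs'"
  proof (rule nth_equalityI)
    show "length cs = length cs'" using h1 h2 by (simp add: ishom_iff)
  next
    fix k assume k: "k < length cs"
    then have k': "k < length xs" using h1 by (simp add: ishom_iff)
    show "cs ! k = cs' ! k"
    proof (rule nth_equalityI)
      show "length (cs ! k) = length (cs' ! k)" using h1 h2 k' by (simp add: ishom_iff)
    next
      fix l assume l: "l < length (cs ! k)"
      then have "l < f ! Suc k - f ! k" using h1 k' by (simp add: ishom_iff)
      then have "cell m1 k (f ! k + l) = cell m2 k (f ! k + l)"
        using assms(4)[OF k', of "f ! k + l"] m1 by simp
      then show "cs ! k ! l = cs' ! k ! l" using m1 m2 f by (simp add: cell_def)
    qed
  qed
  then show ?thesis using m1 m2 f by simp
qed

lemma concat_nth_ex:
  "r < length (concat L) \<Longrightarrow> \<exists>l<length L. length (concat (take l L)) \<le> r \<and>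
     r < length (concat (take l L)) + length (L ! l) \<and> concat L ! r = L ! l ! (r - length (concat (take l L)))"
proof (induction L arbitrary: r)
  case Nil then show ?case by simp
next
  case (Cons a L)
  show ?case
  proof (cases "r < length a")
    case True
    then show ?thesis by (intro exI[of _ 0]) (simp add: nth_append)
  next
    case False
    then have "r - length a < length (concat L)" using Cons.prems by simp
    from Cons.IH[OF this] obtain l where l: "l < length L" "length (concat (take l L)) \<le> r - length a"
      "r - length a < length (concat (take l L)) + length (L ! l)"
      "concat L ! (r - length a) = L ! l ! (r - length a - length (concat (take l L)))" by blast
    show ?thesis using False l
      by (intro exI[of _ "Suc l"]) (auto simp: nth_append)
  qed
qed

lemma len_concat_take:
  assumes "\<And>l. l < n \<Longrightarrow> length (L ! l) = a (Suc l) - a l" "\<And>l. l < n \<Longrightarrow> a l \<le> a (Suc l)"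
    "length L = n" "l \<le> n"
  shows "length (concat (take l L)) = a l - a 0"
  using assms(4)
proof (induction l)
  case 0 then show ?case by simp
next
  case (Suc l)
  have "take (Suc l) L = take l L @ [L ! l]" using Suc.prems assms(3) by (simp add: take_Suc_conv_app_nth)
  moreover have "a 0 \<le> a l"
  proof -
    have "\<forall>l'\<le>l. a 0 \<le> a l'"
    proof (intro allI impI)
      fix l' assume "l' \<le> l" then show "a 0 \<le> a l'"
        by (induction l') (use assms(2) Suc.prems in \<open>auto intro: le_trans\<close>)
    qed
    then show ?thesis by simp
  qed
  ultimately show ?case using Suc assms(1,2)[of l] by simp
qed

lemma und_comp[simp]: "und (comp (H g ds) (H f cs)) = map ((!) g) f"
  by (simp add: comp.simps)

lemma und_comp': "und (comp m2 m1) = map ((!) (und m2)) (und m1)"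
  by (cases m1, cases m2) simp

lemma comp_cell:
  assumes h1: "ishom (T xs) (T ys) (H f cs)" and h2: "ishom (T ys) (T zs) (H g ds)"
    and k: "k < length xs" and jj: "g ! (f ! k) \<le> jj" "jj < g ! (f ! Suc k)"
  shows "\<exists>j. f ! k \<le> j \<and> j < f ! Suc k \<and> g ! j \<le> jj \<and> jj < g ! Suc j \<and>
     cell (comp (H g ds) (H f cs)) k jj = comp (cell (H g ds) j jj) (cell (H f cs) k j)"
proof -
  define L where "L = map (\<lambda>l. map (\<lambda>d. comp d (cs ! k ! l)) (ds ! (f ! k + l))) [0..<length (cs ! k)]"
  have csk: "length (cs ! k) = f ! Suc k - f ! k" "length cs = length xs" using h1 k by (auto simp: ishom_iff)
  have fk: "f ! k \<le> f ! Suc k" "f ! Suc k \<le> length ys" using h1 k by (auto simp: ishom_iff sorted_iff_nth_mono)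
  have gl: "length g = Suc (length ys)" "sorted g" using h2 by (auto simp: ishom_iff)
  have dsl: "length (ds ! j) = g ! Suc j - g ! j" if "j < length ys" for j
    using h2 that by (auto simp: ishom_iff)
  have gmono: "g ! a \<le> g ! b" if "a \<le> b" "b \<le> length ys" for a b
    using gl that by (auto simp: sorted_iff_nth_mono)
  have LL: "length (L ! l) = g ! (f ! k + Suc l) - g ! (f ! k + l)" if "l < f ! Suc k - f ! k" for l
    using that csk fk dsl[of "f ! k + l"] unfolding L_def by simp
  have lct: "length (concat (take l L)) = g ! (f ! k + l) - g ! (f ! k + 0)" if "l \<le> f ! Suc k - f ! k" for l
    by (rule len_concat_take[where a="\<lambda>l. g ! (f ! k + l)" and n="f ! Suc k - f ! k"])
       (use LL that csk fk gmono in \<open>auto simp: L_def\<close>)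
  have lenL: "length (concat L) = g ! (f ! Suc k) - g ! (f ! k)"
    using lct[of "f ! Suc k - f ! k"] csk fk unfolding L_def by simp
  define r where "r = jj - g ! (f ! k)"
  have r: "r < length (concat L)" using jj lenL unfolding r_def by simp
  from concat_nth_ex[OF r] obtain l where l: "l < length L" "length (concat (take l L)) \<le> r"
    "r < length (concat (take l L)) + length (L ! l)"
    "concat L ! r = L ! l ! (r - length (concat (take l L)))" by blast
  have l': "l < f ! Suc k - f ! k" using l(1) csk unfolding L_def by simp
  define j where "j = f ! k + l"
  have lc: "length (concat (take l L)) = g ! j - g ! (f ! k)" using lct[of l] l' unfolding j_def by simp
  have gj: "g ! (f ! k) \<le> g ! j" "g ! j \<le> g ! Suc j" using gmono[of "f ! k" j] gmono[of j "Suc j"] l' fk unfolding j_def by auto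
  have Ll: "length (L ! l) = g ! Suc j - g ! j" using LL[OF l'] unfolding j_def by simp
  have jr: "g ! j \<le> jj" "jj < g ! Suc j" using l(2,3) lc Ll gj jj unfolding r_def by auto
  have idx: "r - length (concat (take l L)) = jj - g ! j" using lc gj jj unfolding r_def by simp
  have "cell (comp (H g ds) (H f cs)) k jj = concat L ! r"
    unfolding cell_def r_def L_def using k csk h1 by (simp add: comp.simps ishom_iff)
  also have "\<dots> = comp (ds ! j ! (jj - g ! j)) (cs ! k ! l)"
    using l(4) idx l' csk jr Ll unfolding L_def j_def by simp
  finally show ?thesis using jr l' unfolding j_def by (intro exI[of _ "f ! k + l"]) (auto simp: cell_def)
qed



definition tsi :: "tree list \<Rightarrow> nat \<Rightarrow> tree list" where
  "tsi ts i = take i ts @ [T []] @ drop i ts"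

lemma theta_i_T: "theta_i (T ts) i = T (tsi ts i)"
  by (simp add: theta_i_def children_def tsi_def)

lemma length_tsi[simp]: "i \<le> length ts \<Longrightarrow> length (tsi ts i) = Suc (length ts)"
  by (simp add: tsi_def)

lemma nth_tsi: "i \<le> length ts \<Longrightarrow> j \<le> length ts \<Longrightarrow>
   tsi ts i ! j = (if j < i then ts ! j else if j = i then T [] else ts ! (j - 1))"
  by (auto simp: tsi_def nth_append min_def)

definition sgf :: "nat \<Rightarrow> nat \<Rightarrow> nat" where
  "sgf i v = (if v \<le> i then v else v - 1)"

definition sig :: "tree list \<Rightarrow> nat \<Rightarrow> hom" where
  "sig ts i = mkH (map (sgf i) [0..<Suc (Suc (length ts))]) (Suc (length ts)) (\<lambda>j _. idh (tsi ts i ! j))"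

lemma sorted_map_upt: "(\<And>a b. a \<le> b \<Longrightarrow> F a \<le> F b) \<Longrightarrow> sorted (map F [0..<n])"
  by (auto simp: sorted_iff_nth_mono)

lemma sgf_mono: "a \<le> b \<Longrightarrow> sgf i a \<le> sgf i b" by (auto simp: sgf_def)

lemma sig_ishom: assumes i: "i \<le> length ts" shows "ishom (T (tsi ts i)) (T ts) (sig ts i)"
proof -
  have L: "length (tsi ts i) = Suc (length ts)" using i by simp
  show ?thesis unfolding sig_def L[symmetric]
  proof (rule ishom_mkH)
  show "length (map (sgf i) [0..<Suc (length (tsi ts i))]) = Suc (length (tsi ts i))" by simp
  show "\<forall>k<length (map (sgf i) [0..<Suc (length (tsi ts i))]). map (sgf i) [0..<Suc (length (tsi ts i))] ! k \<le> length ts"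
    using i unfolding L by (auto simp: sgf_def simp del: upt_Suc)
  show "sorted (map (sgf i) [0..<Suc (length (tsi ts i))])"
    by (rule sorted_map_upt) (rule sgf_mono)
  fix k j assume k: "k < length (tsi ts i)"
    and j: "map (sgf i) [0..<Suc (length (tsi ts i))] ! k \<le> j" "j < map (sgf i) [0..<Suc (length (tsi ts i))] ! Suc k"
  then have "j = sgf i k" "k \<noteq> i" using i unfolding L by (auto simp: sgf_def nth_append simp del: upt_Suc split: if_splits)
  then show "ishom (tsi ts i ! k) (ts ! j) (idh (tsi ts i ! k))"
    using i k unfolding L by (auto simp: nth_tsi sgf_def idh_ishom)
  qed
qed

definition skf :: "nat \<Rightarrow> nat \<Rightarrow> nat" where
  "skf sk v = (if v < sk then v else Suc v)"

lemma ins_map_mkH: "ins_map (T ts) i sk =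
   mkH (map (skf sk) [0..<Suc (length ts)]) (length ts) (\<lambda>k j. if j = i then bang (ts ! k) else idh (ts ! k))"
proof -
  have G: "map (\<lambda>j. if j = Suc i then bang (ts ! k) else idh (ts ! k)) [Suc a..<Suc b]
     = map (\<lambda>j. if j = i then bang (ts ! k) else idh (ts ! k)) [a..<b]" for k a b
    by (rule nth_equalityI) (auto simp del: upt_Suc)
  have ch: "children (T ts) = ts" by (simp add: children_def)
  have e1: "ins_map (T ts) i sk = H (map (skf sk) [0..<Suc (length ts)])
     (map (\<lambda>k. map (\<lambda>j. if j = Suc i then bang (ts ! k) else idh (ts ! k)) [Suc (skf sk k)..<Suc (skf sk (Suc k))]) [0..<length ts])"
    unfolding ins_map_def Let_def ch skf_def by (rule refl)
  show ?thesis unfolding e1 mkH_def G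
    by (simp del: upt_Suc add: nth_append)
qed

lemma skf_mono: "a \<le> b \<Longrightarrow> skf sk a \<le> skf sk b" by (auto simp: skf_def)

lemma ins_map_ishom:
  assumes i: "i \<le> length ts" and sk: "sk = i \<or> sk = Suc i"
  shows "ishom (T ts) (T (tsi ts i)) (ins_map (T ts) i sk)"
  unfolding ins_map_mkH
proof (rule ishom_mkH)
  show "length (map (skf sk) [0..<Suc (length ts)]) = Suc (length ts)" by simp
  show "\<forall>k<length (map (skf sk) [0..<Suc (length ts)]). map (skf sk) [0..<Suc (length ts)] ! k \<le> length (tsi ts i)"
    using i by (auto simp: skf_def simp del: upt_Suc)
  show "sorted (map (skf sk) [0..<Suc (length ts)])" by (rule sorted_map_upt) (rule skf_mono)
  fix k j assume k: "k < length ts" and j: "map (skf sk) [0..<Suc (length ts)] ! k \<le> j"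
    "j < map (skf sk) [0..<Suc (length ts)] ! Suc k"
  then have j': "skf sk k \<le> j" "j < skf sk (Suc k)" by (simp_all del: upt_Suc)
  show "ishom (ts ! k) (tsi ts i ! j) (if j = i then bang (ts ! k) else idh (ts ! k))"
  proof (cases "j = i")
    case True then show ?thesis using i by (simp add: nth_tsi bang_ishom)
  next
    case False
    have jl: "j \<le> length ts" using j' k by (auto simp: skf_def split: if_splits)
    have idx: "(if j < i then j else j - 1) = k" using False j' sk
      unfolding skf_def by (auto split: if_splits)
    have "tsi ts i ! j = ts ! k" using False i jl idx
      by (auto simp: nth_tsi split: if_splits)
    then show ?thesis using False by (simp add: idh_ishom)
  qed
qed

lemma alpha_ins: "alpha (T ts) i = ins_map (T ts) i (Suc i)" by (simp add: alpha_def)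
lemma beta_ins: "beta (T ts) i = ins_map (T ts) i i" by (simp add: beta_def)

lemma comp_cell':
  assumes h1: "ishom (T xs) (T ys) m1" and h2: "ishom (T ys) (T zs) m2"
    and k: "k < length xs" and jj: "und m2 ! (und m1 ! k) \<le> jj" "jj < und m2 ! (und m1 ! Suc k)"
  shows "\<exists>j. und m1 ! k \<le> j \<and> j < und m1 ! Suc k \<and> und m2 ! j \<le> jj \<and> jj < und m2 ! Suc j \<and>
     cell (comp m2 m1) k jj = comp (cell m2 j jj) (cell m1 k j)"
proof -
  obtain f cs where m1: "m1 = H f cs" by (cases m1)
  obtain g ds where m2: "m2 = H g ds" by (cases m2)
  show ?thesis using comp_cell[of xs ys f cs zs g ds k jj] assms unfolding m1 m2 by simp
qed

definition liftH :: "nat \<Rightarrow> (nat \<Rightarrow> bool) \<Rightarrow> tree list \<Rightarrow> hom \<Rightarrow> hom" where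
  "liftH i G xs x = mkH (map (\<lambda>k. und x ! k + (if G k then 1 else 0)) [0..<Suc (length xs)]) (length xs)
     (\<lambda>k j. if j = i then bang (xs ! k) else cell x k (sgf i j))"

definition valid :: "nat \<Rightarrow> (nat \<Rightarrow> bool) \<Rightarrow> tree list \<Rightarrow> hom \<Rightarrow> bool" where
  "valid i G xs x = (\<forall>k\<le>length xs. (\<not> G k \<longrightarrow> und x ! k \<le> i) \<and> (G k \<longrightarrow> i \<le> und x ! k))"

definition Gmono :: "(nat \<Rightarrow> bool) \<Rightarrow> tree list \<Rightarrow> bool" where
  "Gmono G xs = (\<forall>a b. a \<le> b \<longrightarrow> b \<le> length xs \<longrightarrow> G a \<longrightarrow> G b)"

lemma und_liftH: "k \<le> length xs \<Longrightarrow> und (liftH i G xs x) ! k = und x ! k + (if G k then 1 else 0)"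
  by (simp add: liftH_def del: upt_Suc)

lemma length_und_liftH[simp]: "length (und (liftH i G xs x)) = Suc (length xs)"
  by (simp add: liftH_def del: upt_Suc)

lemma lift_ishom:
  assumes x: "ishom (T xs) (T ts) x" and i: "i \<le> length ts" and v: "valid i G xs x" and G: "Gmono G xs"
  shows "ishom (T xs) (T (tsi ts i)) (liftH i G xs x)"
  unfolding liftH_def
proof (rule ishom_mkH)
  note xu = ishom_und[OF x]
  show "length (map (\<lambda>k. und x ! k + (if G k then 1 else 0)) [0..<Suc (length xs)]) = Suc (length xs)" by simp
  show "\<forall>k<length (map (\<lambda>k. und x ! k + (if G k then 1 else 0)) [0..<Suc (length xs)]).
     map (\<lambda>k. und x ! k + (if G k then 1 else 0)) [0..<Suc (length xs)] ! k \<le> length (tsi ts i)"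
    using xu i by (auto simp del: upt_Suc)
  show "sorted (map (\<lambda>k. und x ! k + (if G k then 1 else 0)) [0..<Suc (length xs)])"
    unfolding sorted_iff_nth_mono
  proof (intro allI impI)
    fix a b assume ab: "a \<le> b" "b < length (map (\<lambda>k. und x ! k + (if G k then 1 else 0)) [0..<Suc (length xs)])"
    then have "und x ! a \<le> und x ! b" using xu by (auto simp: sorted_iff_nth_mono)
    moreover have "G a \<Longrightarrow> G b" using G ab unfolding Gmono_def by auto
    ultimately show "map (\<lambda>k. und x ! k + (if G k then 1 else 0)) [0..<Suc (length xs)] ! a
         \<le> map (\<lambda>k. und x ! k + (if G k then 1 else 0)) [0..<Suc (length xs)] ! b"
      using ab by (auto simp del: upt_Suc)
  qed
  fix k j assume k: "k < length xs" and j: "map (\<lambda>k. und x ! k + (if G k then 1 else 0)) [0..<Suc (length xs)] ! k \<le> j"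
    "j < map (\<lambda>k. und x ! k + (if G k then 1 else 0)) [0..<Suc (length xs)] ! Suc k"
  then have j': "und x ! k + (if G k then 1 else 0) \<le> j" "j < und x ! Suc k + (if G (Suc k) then 1 else 0)"
    by (simp_all del: upt_Suc)
  show "ishom (xs ! k) (tsi ts i ! j) (if j = i then bang (xs ! k) else cell x k (sgf i j))"
  proof (cases "j = i")
    case True then show ?thesis using i by (simp add: nth_tsi bang_ishom)
  next
    case False
    have vk: "(\<not> G k \<longrightarrow> und x ! k \<le> i) \<and> (G k \<longrightarrow> i \<le> und x ! k)"
      "(\<not> G (Suc k) \<longrightarrow> und x ! Suc k \<le> i) \<and> (G (Suc k) \<longrightarrow> i \<le> und x ! Suc k)"
      using v k unfolding valid_def by auto
    have r: "und x ! k \<le> sgf i j" "sgf i j < und x ! Suc k"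
      using j' vk False by (auto simp: sgf_def split: if_splits)
    have xl: "und x ! Suc k \<le> length ts" using xu k by auto
    have "tsi ts i ! j = ts ! sgf i j" using False i r xl by (auto simp: nth_tsi sgf_def)
    then show ?thesis using False ishom_cell[OF x k r] by simp
  qed
qed

lemma und_sig: "v \<le> Suc (length ts) \<Longrightarrow> und (sig ts i) ! v = sgf i v"
  by (simp add: sig_def del: upt_Suc)

lemma cell_sig: "j < Suc (length ts) \<Longrightarrow> sgf i j \<le> jj \<Longrightarrow> jj < sgf i (Suc j) \<Longrightarrow> cell (sig ts i) j jj = idh (tsi ts i ! j)"
  unfolding sig_def by (subst cell_mkH) (simp_all del: upt_Suc)

lemma comp_sig_lift:
  assumes x: "ishom (T xs) (T ts) x" and i: "i \<le> length ts" and v: "valid i G xs x" and G: "Gmono G xs"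
  shows "comp (sig ts i) (liftH i G xs x) = x"
proof -
  note L = lift_ishom[OF x i v G]
  note S = sig_ishom[OF i]
  note xu = ishom_und[OF x]
  have vk: "k \<le> length xs \<Longrightarrow> (\<not> G k \<longrightarrow> und x ! k \<le> i) \<and> (G k \<longrightarrow> i \<le> und x ! k)" for k
    using v unfolding valid_def by auto
  have lu: "und (liftH i G xs x) ! k \<le> Suc (length ts)" if "k \<le> length xs" for k
    using ishom_und(2)[OF L] that i by (simp add: liftH_def)
  have U: "und (sig ts i) ! (und (liftH i G xs x) ! k) = und x ! k" if k: "k \<le> length xs" for k
    using und_sig[OF lu[OF k]] und_liftH[OF k] vk[OF k] by (auto simp: sgf_def)
  show ?thesis
  proof (rule hom_ext[OF comp_ishom[OF L S] x])
    show "und (comp (sig ts i) (liftH i G xs x)) = und x"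
      using U xu ishom_und(1)[OF L] by (intro nth_equalityI) (auto simp: und_comp')
  next
    fix k jj assume k: "k < length xs" and jj: "und (comp (sig ts i) (liftH i G xs x)) ! k \<le> jj"
      "jj < und (comp (sig ts i) (liftH i G xs x)) ! Suc k"
    have jj': "und (sig ts i) ! (und (liftH i G xs x) ! k) \<le> jj" "jj < und (sig ts i) ! (und (liftH i G xs x) ! Suc k)"
      using jj k ishom_und(1)[OF L] by (auto simp: und_comp')
    from comp_cell'[OF L S k jj'] obtain j where j: "und (liftH i G xs x) ! k \<le> j" "j < und (liftH i G xs x) ! Suc k"
      "und (sig ts i) ! j \<le> jj" "jj < und (sig ts i) ! Suc j"
      "cell (comp (sig ts i) (liftH i G xs x)) k jj = comp (cell (sig ts i) j jj) (cell (liftH i G xs x) k j)" by blast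
    have jl: "j < Suc (length ts)" using j(2) lu[of "Suc k"] k by simp
    have j2: "sgf i j \<le> jj" "jj < sgf i (Suc j)" using j(3,4) und_sig[of j ts i] und_sig[of "Suc j" ts i] jl by auto
    then have ji: "j \<noteq> i" "jj = sgf i j" by (auto simp: sgf_def split: if_splits)
    have cl: "cell (liftH i G xs x) k j = cell x k jj"
      unfolding liftH_def using ji j(1,2) k by (subst cell_mkH) (auto simp: und_liftH simp del: upt_Suc)
    have r: "und x ! k \<le> jj" "jj < und x ! Suc k" using jj k ishom_und(1)[OF L] U[of k] U[of "Suc k"]
      by (auto simp: und_comp')
    have xl: "und x ! Suc k \<le> length ts" using xu k by auto
    have "tsi ts i ! j = ts ! jj" using ji i jl by (auto simp: nth_tsi sgf_def)
    then have "ishom (xs ! k) (tsi ts i ! j) (cell x k jj)" using ishom_cell[OF x k r] by simp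
    then show "cell (comp (sig ts i) (liftH i G xs x)) k jj = cell x k jj"
      using j(5) cl cell_sig[OF jl j2] comp_idh_left by simp
  qed
qed

lemma lift_unique:
  assumes z: "ishom (T xs) (T (tsi ts i)) z" and i: "i \<le> length ts"
  defines "G \<equiv> (\<lambda>k. i < und z ! k)"
  shows "valid i G xs (comp (sig ts i) z)" "Gmono G xs" "z = liftH i G xs (comp (sig ts i) z)"
proof -
  note S = sig_ishom[OF i]
  note X = comp_ishom[OF z S]
  note zu = ishom_und[OF z]
  have zl: "und z ! k \<le> Suc (length ts)" if "k \<le> length xs" for k using zu that i by auto
  have xk: "und (comp (sig ts i) z) ! k = sgf i (und z ! k)" if "k \<le> length xs" for k
    using zl[OF that] zu that by (simp add: und_comp' und_sig)
  show v: "valid i G xs (comp (sig ts i) z)"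
    unfolding valid_def G_def using xk by (auto simp: sgf_def)
  show G: "Gmono G xs" unfolding Gmono_def G_def
  proof (intro allI impI)
    fix a b assume ab: "a \<le> b" "b \<le> length xs" "i < und z ! a"
    have "und z ! a \<le> und z ! b" using zu(1,3) ab by (auto simp: sorted_iff_nth_mono)
    then show "i < und z ! b" using ab by simp
  qed
  note L = lift_ishom[OF X i v G]
  show "z = liftH i G xs (comp (sig ts i) z)"
  proof (rule hom_ext[OF z L])
    show U: "und z = und (liftH i G xs (comp (sig ts i) z))"
      using zu xk by (intro nth_equalityI) (auto simp: und_liftH G_def sgf_def ishom_und(1)[OF L])
    fix k j assume k: "k < length xs" and j: "und z ! k \<le> j" "j < und z ! Suc k"
    have jl: "j \<le> length ts" using j(2) zl[of "Suc k"] k by simp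
    show "cell z k j = cell (liftH i G xs (comp (sig ts i) z)) k j"
    proof (cases "j = i")
      case True
      have "ishom (xs ! k) (T []) (cell z k j)" using ishom_cell[OF z k j] True i by (simp add: nth_tsi)
      then have "cell z k j = bang (xs ! k)" by (rule ishom_bang_unique)
      then show ?thesis using True k j U unfolding liftH_def by (subst cell_mkH) (auto simp del: upt_Suc)
    next
      case False
      have jj': "und (sig ts i) ! (und z ! k) \<le> sgf i j" "sgf i j < und (sig ts i) ! (und z ! Suc k)"
        using j k zl[of k] zl[of "Suc k"] False by (auto simp: und_sig sgf_def)
      from comp_cell'[OF z S k jj'] obtain j' where j': "und z ! k \<le> j'" "j' < und z ! Suc k"
        "und (sig ts i) ! j' \<le> sgf i j" "sgf i j < und (sig ts i) ! Suc j'"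
        "cell (comp (sig ts i) z) k (sgf i j) = comp (cell (sig ts i) j' (sgf i j)) (cell z k j')" by blast
      have j'l: "j' < Suc (length ts)" using j'(2) zl[of "Suc k"] k by simp
      have j2: "sgf i j' \<le> sgf i j" "sgf i j < sgf i (Suc j')" using j'(3,4) j'l by (auto simp: und_sig)
      then have jj: "j' = j" using False by (auto simp: sgf_def split: if_splits)
      have c1: "cell (liftH i G xs (comp (sig ts i) z)) k j = cell (comp (sig ts i) z) k (sgf i j)"
        using False k j U unfolding liftH_def by (subst cell_mkH) (auto simp del: upt_Suc)
      have "cell (comp (sig ts i) z) k (sgf i j) = cell z k j"
        using j'(5) jj cell_sig[OF j'l j2] comp_idh_left[OF ishom_cell[OF z k j]] by simp
      then show ?thesis using c1 by simp
    qed
  qed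
qed

lemma und_ins: "v \<le> length ts \<Longrightarrow> und (ins_map (T ts) i sk) ! v = skf sk v"
  by (simp add: ins_map_mkH del: upt_Suc)

lemma cell_ins: "j < length ts \<Longrightarrow> skf sk j \<le> jj \<Longrightarrow> jj < skf sk (Suc j) \<Longrightarrow>
   cell (ins_map (T ts) i sk) j jj = (if jj = i then bang (ts ! j) else idh (ts ! j))"
  unfolding ins_map_mkH by (subst cell_mkH) (simp_all del: upt_Suc)

lemma comp_ins_lift:
  assumes x: "ishom (T xs) (T ts) x" and i: "i \<le> length ts" and sk: "sk = i \<or> sk = Suc i"
  defines "G \<equiv> (\<lambda>k. sk \<le> und x ! k)"
  shows "valid i G xs x" "Gmono G xs" "comp (ins_map (T ts) i sk) x = liftH i G xs x"
proof -
  note A = ins_map_ishom[OF i sk]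
  note xu = ishom_und[OF x]
  have xl: "und x ! k \<le> length ts" if "k \<le> length xs" for k using xu that by auto
  show v: "valid i G xs x" unfolding valid_def G_def using sk by auto
  show G: "Gmono G xs" unfolding Gmono_def G_def
  proof (intro allI impI)
    fix a b assume ab: "a \<le> b" "b \<le> length xs" "sk \<le> und x ! a"
    have "und x ! a \<le> und x ! b" using xu(1,3) ab by (auto simp: sorted_iff_nth_mono)
    then show "sk \<le> und x ! b" using ab by simp
  qed
  note L = lift_ishom[OF x i v G]
  show "comp (ins_map (T ts) i sk) x = liftH i G xs x"
  proof (rule hom_ext[OF comp_ishom[OF x A] L])
    have U: "und (comp (ins_map (T ts) i sk) x) ! k = und x ! k + (if G k then 1 else 0)" if k: "k \<le> length xs" for k
      using xl[OF k] xu(1) k by (auto simp: und_comp' und_ins skf_def G_def)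
    show U': "und (comp (ins_map (T ts) i sk) x) = und (liftH i G xs x)"
      using U xu(1) by (intro nth_equalityI) (auto simp: und_comp' und_liftH)
    fix k jj assume k: "k < length xs" and jj: "und (comp (ins_map (T ts) i sk) x) ! k \<le> jj"
      "jj < und (comp (ins_map (T ts) i sk) x) ! Suc k"
    have jj': "und (ins_map (T ts) i sk) ! (und x ! k) \<le> jj" "jj < und (ins_map (T ts) i sk) ! (und x ! Suc k)"
      using jj k xu(1) by (auto simp: und_comp')
    from comp_cell'[OF x A k jj'] obtain j where j: "und x ! k \<le> j" "j < und x ! Suc k"
      "und (ins_map (T ts) i sk) ! j \<le> jj" "jj < und (ins_map (T ts) i sk) ! Suc j"
      "cell (comp (ins_map (T ts) i sk) x) k jj = comp (cell (ins_map (T ts) i sk) j jj) (cell x k j)" by blast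
    have jl: "j < length ts" using j(2) xl[of "Suc k"] k by simp
    have j2: "skf sk j \<le> jj" "jj < skf sk (Suc j)" using j(3,4) jl by (auto simp: und_ins)
    have cx: "ishom (xs ! k) (ts ! j) (cell x k j)" using ishom_cell[OF x k j(1,2)] .
    have cl: "cell (liftH i G xs x) k jj = (if jj = i then bang (xs ! k) else cell x k (sgf i jj))"
      using jj k U' unfolding liftH_def by (subst cell_mkH) (auto simp del: upt_Suc)
    show "cell (comp (ins_map (T ts) i sk) x) k jj = cell (liftH i G xs x) k jj"
    proof (cases "jj = i")
      case True
      then show ?thesis using j(5) cell_ins[OF jl j2] cl comp_bang[OF cx] by simp
    next
      case False
      have "sgf i jj = j" using False j2 sk unfolding skf_def sgf_def by (auto split: if_splits)
      then show ?thesis using False j(5) cell_ins[OF jl j2] cl comp_idh_left[OF cx] by simp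
    qed
  qed
qed

definition constH :: "tree \<Rightarrow> nat \<Rightarrow> hom" where
  "constH s c = comp (H [c] []) (bang s)"

lemma und_bang: "und (bang (T xs)) = replicate (Suc (length xs)) 0" by simp

lemma und_constH: "k \<le> length xs \<Longrightarrow> und (constH (T xs) c) ! k = c"
  by (simp add: constH_def und_comp' del: replicate_Suc)

lemma constH_ishom: "c \<le> length ts \<Longrightarrow> ishom s (T ts) (constH s c)"
  unfolding constH_def by (rule comp_ishom[OF bang_ishom]) (simp add: ishom_obj)

lemma e_ishom: "c \<le> length ts \<Longrightarrow> ishom Ic (T (tsi ts c)) (e_i c)"
  by (simp add: Ic_def e_i_def ishom_iff nth_tsi idh_ishom less_Suc_eq nth_Cons')

lemma comp_e_lift:
  fixes ts :: "tree list"
  assumes y: "ishom (T xs) Ic y" and c: "c \<le> length ts"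
  defines "G \<equiv> (\<lambda>k. und y ! k = 1)"
  shows "valid c G xs (constH (T xs) c)" "Gmono G xs" "comp (e_i c) y = liftH c G xs (constH (T xs) c)"
proof -
  note E = e_ishom[OF c]
  have y': "ishom (T xs) (T [T []]) y" using y by (simp add: Ic_def)
  note yu = ishom_und[OF y']
  note X = constH_ishom[OF c, of "T xs"]
  show v: "valid c G xs (constH (T xs) c)" unfolding valid_def by (simp add: und_constH)
  show G: "Gmono G xs" unfolding Gmono_def G_def
  proof (intro allI impI)
    fix a b assume ab: "a \<le> b" "b \<le> length xs" "und y ! a = 1"
    have "und y ! a \<le> und y ! b" using sorted_nth_mono[OF yu(3) ab(1)] yu(1) ab(2) by simp
    moreover have "und y ! b \<le> 1" using yu(1,2) ab by auto
    ultimately show "und y ! b = 1" using ab by simp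
  qed
  note L = lift_ishom[OF X c v G]
  have Ec: "ishom (T [T []]) (T (tsi ts c)) (e_i c)" using E by (simp add: Ic_def)
  show "comp (e_i c) y = liftH c G xs (constH (T xs) c)"
  proof (rule hom_ext[OF comp_ishom[OF y E] L])
    have U: "und (comp (e_i c) y) ! k = c + (if G k then 1 else 0)" if k: "k \<le> length xs" for k
    proof -
      have "und y ! k \<le> 1" using yu k by auto
      then show ?thesis using yu(1) k by (auto simp: und_comp' e_i_def G_def less_Suc_eq_le nth_Cons')
    qed
    show U': "und (comp (e_i c) y) = und (liftH c G xs (constH (T xs) c))"
      using U yu(1) by (intro nth_equalityI) (auto simp: und_comp' und_liftH und_constH)
    fix k jj assume k: "k < length xs" and jj: "und (comp (e_i c) y) ! k \<le> jj" "jj < und (comp (e_i c) y) ! Suc k"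
    have jj': "und (e_i c) ! (und y ! k) \<le> jj" "jj < und (e_i c) ! (und y ! Suc k)"
      using jj k yu(1) by (auto simp: und_comp')
    from comp_cell'[OF y' Ec k jj'] obtain j where j: "und y ! k \<le> j" "j < und y ! Suc k"
      "und (e_i c) ! j \<le> jj" "jj < und (e_i c) ! Suc j"
      "cell (comp (e_i c) y) k jj = comp (cell (e_i c) j jj) (cell y k j)" by blast
    have "und y ! Suc k \<le> 1" using yu k by auto
    then have j0: "j = 0" using j(2) by simp
    then have jc: "jj = c" using j(3,4) by (simp add: e_i_def)
    have cy: "ishom (xs ! k) (T []) (cell y k 0)" using ishom_cell[OF y' k, of 0] j j0 by simp
    have "cell (comp (e_i c) y) k jj = bang (xs ! k)"
      using j(5) j0 jc comp_idh_left[OF cy] ishom_bang_unique[OF cy] by (simp add: e_i_def cell_def)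
    moreover have "cell (liftH c G xs (constH (T xs) c)) k jj = bang (xs ! k)"
      using jj k U' jc unfolding liftH_def by (subst cell_mkH) (auto simp del: upt_Suc)
    ultimately show "cell (comp (e_i c) y) k jj = cell (liftH c G xs (constH (T xs) c)) k jj" by simp
  qed
qed

definition rhoH :: "tree list \<Rightarrow> nat \<Rightarrow> hom" where
  "rhoH ts i = mkH (map (\<lambda>v. if v \<le> i then 0 else 1) [0..<Suc (Suc (length ts))]) (Suc (length ts)) (\<lambda>_ _. bang (T []))"

lemma rho_ishom: assumes i: "i \<le> length ts" shows "ishom (T (tsi ts i)) Ic (rhoH ts i)"
proof -
  have L: "length (tsi ts i) = Suc (length ts)" using i by simp
  show ?thesis unfolding rhoH_def Ic_def L[symmetric]
  proof (rule ishom_mkH)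
    show "sorted (map (\<lambda>v. if v \<le> i then (0::nat) else 1) [0..<Suc (length (tsi ts i))])"
      by (rule sorted_map_upt) auto
    fix k j assume k: "k < length (tsi ts i)" and j: "map (\<lambda>v. if v \<le> i then (0::nat) else 1) [0..<Suc (length (tsi ts i))] ! k \<le> j"
      "j < map (\<lambda>v. if v \<le> i then (0::nat) else 1) [0..<Suc (length (tsi ts i))] ! Suc k"
    then have "k = i" "j = 0" by (auto simp del: upt_Suc split: if_splits)
    then show "ishom (tsi ts i ! k) ([T []] ! j) (bang (T []))" using i by (simp add: nth_tsi ishom_iff)
  qed (auto simp del: upt_Suc)
qed

lemma und_rho: "v \<le> Suc (length ts) \<Longrightarrow> und (rhoH ts i) ! v = (if v \<le> i then 0 else 1)"
  by (simp add: rhoH_def del: upt_Suc)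



lemma Inl_Plus[simp]: "Inl a \<in> A <+> B \<longleftrightarrow> a \<in> A" by auto
lemma Inr_Plus[simp]: "Inr b \<in> A <+> B \<longleftrightarrow> b \<in> B" by auto

definition Mset :: "tree \<Rightarrow> tree \<Rightarrow> (hom \<times> (hom \<Rightarrow> bool)) set" where
  "Mset \<theta> s = {(x, u). ishom s \<theta> x \<and> u \<in> obs s \<rightarrow>\<^sub>E (UNIV :: bool set) \<and>
     ((\<exists>c. ishom (T []) \<theta> c \<and> x = comp c (bang s)) \<or> (\<exists>y. ishom s Ic y \<and> u = IJ s y))}"

definition Mpsh :: "tree \<Rightarrow> (hom \<times> (hom \<Rightarrow> bool)) psh" where
  "Mpsh \<theta> = (Mset \<theta>, \<lambda>s t m (x, u). (comp x m, snd Jpsh s t m u))"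

lemma Jact: "snd Jpsh s t m u = restrict (\<lambda>ob. u (comp m ob)) (obs s)"
  by (simp add: Jpsh_def)

lemma Jcar: "fst Jpsh s = obs s \<rightarrow>\<^sub>E (UNIV :: bool set)"
  by (simp add: Jpsh_def)

lemma Mact: "snd (Mpsh \<theta>) s t m (x, u) = (comp x m, restrict (\<lambda>ob. u (comp m ob)) (obs s))"
  by (simp add: Mpsh_def Jact)

lemma obs_comp: "ishom s t m \<Longrightarrow> oo \<in> obs s \<Longrightarrow> comp m oo \<in> obs t"
  unfolding obs_def using comp_ishom by blast

lemma IJ_in: "IJ s y \<in> obs s \<rightarrow>\<^sub>E (UNIV :: bool set)"
  by (simp add: IJ_def)

lemma restrict_in: "restrict F (obs s) \<in> obs s \<rightarrow>\<^sub>E (UNIV :: bool set)"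
  by simp

lemma IJ_nat: "ishom s t m \<Longrightarrow> ishom t Ic y \<Longrightarrow>
   IJ s (comp y m) = restrict (\<lambda>ob. IJ t y (comp m ob)) (obs s)"
proof (rule ext)
  fix oo assume m: "ishom s t m" and y: "ishom t Ic y"
  show "IJ s (comp y m) oo = restrict (\<lambda>ob. IJ t y (comp m ob)) (obs s) oo"
  proof (cases "oo \<in> obs s")
    case True
    then have "comp m oo \<in> obs t" using obs_comp m by blast
    moreover have "comp (comp y m) oo = comp y (comp m oo)"
    proof -
      have "ishom (T []) s oo" using True unfolding obs_def by simp
      then show ?thesis using comp_assoc[OF _ m y] by metis
    qed
    ultimately show ?thesis using True by (simp add: IJ_def)
  qed (simp add: IJ_def)
qed

lemma obs_T: "obs (T xs) = {H [k] [] | k. k \<le> length xs}"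
  by (auto simp: obs_def ishom_obj)

lemma IJ_val: "k \<le> length xs \<Longrightarrow> IJ (T xs) y (H [k] []) = (und y ! k = 1)"
proof -
  assume k: "k \<le> length xs"
  obtain g ds where y: "y = H g ds" by (cases y)
  show ?thesis using k unfolding y by (simp add: IJ_def obs_T comp_obj)
qed

lemma IJ_inj:
  assumes y1: "ishom s Ic y1" and y2: "ishom s Ic y2" and e: "IJ s y1 = IJ s y2"
  shows "y1 = y2"
proof -
  obtain xs where s: "s = T xs" by (cases s)
  have y1': "ishom (T xs) (T [T []]) y1" and y2': "ishom (T xs) (T [T []]) y2" using y1 y2 s by (auto simp: Ic_def)
  note u1 = ishom_und[OF y1'] and u2 = ishom_und[OF y2']
  show ?thesis
  proof (rule hom_ext[OF y1' y2'])
    show "und y1 = und y2"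
    proof (rule nth_equalityI)
      show "length (und y1) = length (und y2)" using u1 u2 by simp
      fix k assume k: "k < length (und y1)"
      then have "k \<le> length xs" using u1 by simp
      then have "(und y1 ! k = 1) = (und y2 ! k = 1)" using e IJ_val s by metis
      moreover have "und y1 ! k \<le> 1" "und y2 ! k \<le> 1" using u1 u2 k by auto
      ultimately show "und y1 ! k = und y2 ! k" by linarith
    qed
    fix k j assume k: "k < length xs" and j: "und y1 ! k \<le> j" "j < und y1 ! Suc k"
    have "und y1 ! Suc k \<le> 1" using u1 k by auto
    then have "j = 0" using j by simp
    then have "ishom (xs ! k) (T []) (cell y1 k j)" "ishom (xs ! k) (T []) (cell y2 k j)"
      using ishom_cell[OF y1' k j] ishom_cell[OF y2' k, of j] j \<open>und y1 = und y2\<close> by auto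
    then show "cell y1 k j = cell y2 k j" using ishom_bang_unique by metis
  qed
qed

definition XJ :: "tree \<Rightarrow> ((hom \<times> hom) + (hom \<times> (hom \<Rightarrow> bool))) psh" where
  "XJ \<theta> = sum_psh (prod_psh (rep \<theta>) Ipsh) (prod_psh (Theta0 \<theta>) Jpsh)"

definition RJ :: "tree \<Rightarrow> tree \<Rightarrow> (((hom \<times> hom) + (hom \<times> (hom \<Rightarrow> bool))) \<times> ((hom \<times> hom) + (hom \<times> (hom \<Rightarrow> bool)))) set" where
  "RJ \<theta> s = {(Inl ((\<lambda>s (ob, x). (comp ob (bang s), x)) s c), Inr ((\<lambda>s (ob, x). (ob, IJ s x)) s c)) | c. c \<in> fst (prod_psh (Theta0 \<theta>) Ipsh) s}"

lemma JJ_quot: "JJ \<theta> = quot_psh (XJ \<theta>) (RJ \<theta>)"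
  unfolding JJ_def pushout_def XJ_def RJ_def ..

lemma XJ_car: "fst (XJ \<theta>) s = ({m. ishom s \<theta> m} \<times> {m. ishom s Ic m}) <+> (obs \<theta> \<times> (obs s \<rightarrow>\<^sub>E (UNIV :: bool set)))"
  by (simp add: XJ_def sum_psh_def prod_psh_def rep_def Ipsh_def Theta0_def const_psh_def Jpsh_def)

lemma XJ_act_l: "snd (XJ \<theta>) s t m (Inl (x, y)) = Inl (comp x m, comp y m)"
  by (simp add: XJ_def sum_psh_def prod_psh_def rep_def Ipsh_def)

lemma XJ_act_r: "snd (XJ \<theta>) s t m (Inr (ob, u)) = Inr (ob, restrict (\<lambda>oo. u (comp m oo)) (obs s))"
  by (simp add: XJ_def sum_psh_def prod_psh_def Theta0_def const_psh_def Jpsh_def)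

lemma RJ_mem: "(a, b) \<in> RJ \<theta> s \<longleftrightarrow> (\<exists>ob x. ob \<in> obs \<theta> \<and> ishom s Ic x \<and> a = Inl (comp ob (bang s), x) \<and> b = Inr (ob, IJ s x))"
  by (auto simp: RJ_def prod_psh_def Theta0_def const_psh_def Ipsh_def rep_def)

definition PhiJ :: "tree \<Rightarrow> ((hom \<times> hom) + (hom \<times> (hom \<Rightarrow> bool))) \<Rightarrow> hom \<times> (hom \<Rightarrow> bool)" where
  "PhiJ s a = (case a of Inl (x, y) \<Rightarrow> (x, IJ s y) | Inr (ob, u) \<Rightarrow> (comp ob (bang s), u))"

lemma obs_ishom: "ob \<in> obs \<theta> \<longleftrightarrow> ishom (T []) \<theta> ob" by (simp add: obs_def)

lemma comp_const_nat: "ishom (T []) \<theta> ob \<Longrightarrow> ishom s t m \<Longrightarrow> comp (comp ob (bang t)) m = comp ob (bang s)"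
proof -
  assume ob: "ishom (T []) \<theta> ob" and m: "ishom s t m"
  have "comp ob (comp (bang t) m) = comp (comp ob (bang t)) m" using comp_assoc[OF m bang_ishom ob] .
  then show ?thesis using comp_bang[OF m] by simp
qed

lemma JJ_RX: "RX (XJ \<theta>) (RJ \<theta>)"
  unfolding RX_def
proof (intro allI impI)
  fix s a b assume "(a, b) \<in> RJ \<theta> s"
  then obtain ob x where h: "ob \<in> obs \<theta>" "ishom s Ic x" "a = Inl (comp ob (bang s), x)" "b = Inr (ob, IJ s x)"
    unfolding RJ_mem by blast
  have "ishom s \<theta> (comp ob (bang s))" using h(1) comp_ishom[OF bang_ishom] unfolding obs_ishom by blast
  then show "a \<in> fst (XJ \<theta>) s \<and> b \<in> fst (XJ \<theta>) s" using h IJ_in[of s x] by (simp add: XJ_car)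
qed

lemma JJ_resp: "resp (RJ \<theta>) PhiJ"
  unfolding resp_def RJ_mem PhiJ_def by auto

lemma JJ_closed: "closed (XJ \<theta>)"
  unfolding closed_def
proof (intro allI impI)
  fix s t m a assume h: "ishom s t m \<and> a \<in> fst (XJ \<theta>) t"
  show "snd (XJ \<theta>) s t m a \<in> fst (XJ \<theta>) s"
  proof (cases a)
    case (Inl p) then obtain x y where "a = Inl (x, y)" by (cases p) auto
    then show ?thesis using h comp_ishom by (auto simp: XJ_car XJ_act_l)
  next
    case (Inr p) then obtain ob u where "a = Inr (ob, u)" by (cases p) auto
    then show ?thesis using h by (auto simp: XJ_car XJ_act_r)
  qed
qed

lemma JJ_natural: "natural (XJ \<theta>) (Mpsh \<theta>) PhiJ"
  unfolding natural_def
proof (intro allI impI)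
  fix s t m a assume h: "ishom s t m \<and> a \<in> fst (XJ \<theta>) t"
  show "PhiJ s (snd (XJ \<theta>) s t m a) = snd (Mpsh \<theta>) s t m (PhiJ t a)"
  proof (cases a)
    case (Inl p) then obtain x y where a: "a = Inl (x, y)" by (cases p) auto
    then have "ishom t Ic y" using h by (auto simp: XJ_car)
    then show ?thesis using h a IJ_nat by (simp add: XJ_act_l PhiJ_def Mact)
  next
    case (Inr p) then obtain ob u where a: "a = Inr (ob, u)" by (cases p) auto
    then have "ishom (T []) \<theta> ob" using h by (auto simp: XJ_car obs_ishom)
    then have "comp (comp ob (bang t)) m = comp ob (bang s)" using h comp_const_nat by blast
    then show ?thesis using h a by (simp add: XJ_act_r PhiJ_def Mact)
  qed
qed

lemma JJ_surj: "PhiJ s ` fst (XJ \<theta>) s = Mset \<theta> s"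
proof
  show "PhiJ s ` fst (XJ \<theta>) s \<subseteq> Mset \<theta> s"
  proof
    fix z assume "z \<in> PhiJ s ` fst (XJ \<theta>) s"
    then obtain a where a: "a \<in> fst (XJ \<theta>) s" "z = PhiJ s a" by blast
    show "z \<in> Mset \<theta> s"
    proof (cases a)
      case (Inl p) then obtain x y where "a = Inl (x, y)" by (cases p) auto
      then show ?thesis using a by (auto simp: XJ_car PhiJ_def Mset_def IJ_in)
    next
      case (Inr p) then obtain ob u where A: "a = Inr (ob, u)" by (cases p) auto
      then have ob: "ishom (T []) \<theta> ob" and u: "u \<in> obs s \<rightarrow>\<^sub>E (UNIV :: bool set)"
        using a by (auto simp: XJ_car obs_ishom)
      have "ishom s \<theta> (comp ob (bang s))" using comp_ishom[OF bang_ishom ob] .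
      then show ?thesis using a(2) A ob u unfolding Mset_def PhiJ_def by auto
    qed
  qed
next
  show "Mset \<theta> s \<subseteq> PhiJ s ` fst (XJ \<theta>) s"
  proof
    fix z assume z: "z \<in> Mset \<theta> s"
    obtain x u where zxu: "z = (x, u)" by (cases z)
    from z zxu have x: "ishom s \<theta> x" and u: "u \<in> obs s \<rightarrow>\<^sub>E (UNIV :: bool set)"
      and d: "(\<exists>c. ishom (T []) \<theta> c \<and> x = comp c (bang s)) \<or> (\<exists>y. ishom s Ic y \<and> u = IJ s y)"
      by (auto simp: Mset_def)
    from d show "z \<in> PhiJ s ` fst (XJ \<theta>) s"
    proof
      assume "\<exists>c. ishom (T []) \<theta> c \<and> x = comp c (bang s)"
      then obtain c where c: "ishom (T []) \<theta> c" "x = comp c (bang s)" by blast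
      have "Inr (c, u) \<in> fst (XJ \<theta>) s" using c u by (simp add: XJ_car obs_ishom)
      moreover have "PhiJ s (Inr (c, u)) = z" using c zxu by (simp add: PhiJ_def)
      ultimately show ?thesis by (metis image_eqI)
    next
      assume "\<exists>y. ishom s Ic y \<and> u = IJ s y"
      then obtain y where y: "ishom s Ic y" "u = IJ s y" by blast
      have "Inl (x, y) \<in> fst (XJ \<theta>) s" using x y by (simp add: XJ_car)
      moreover have "PhiJ s (Inl (x, y)) = z" using y zxu by (simp add: PhiJ_def)
      ultimately show ?thesis by (metis image_eqI)
    qed
  qed
qed

lemma const_inj: "ishom (T []) \<theta> c1 \<Longrightarrow> ishom (T []) \<theta> c2 \<Longrightarrow> comp c1 (bang s) = comp c2 (bang s) \<Longrightarrow> c1 = c2"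
proof -
  assume c1: "ishom (T []) \<theta> c1" and c2: "ishom (T []) \<theta> c2" and e: "comp c1 (bang s) = comp c2 (bang s)"
  obtain ys where th: "\<theta> = T ys" by (cases \<theta>)
  obtain xs where s: "s = T xs" by (cases s)
  obtain k1 where k1: "c1 = H [k1] []" using c1 unfolding th ishom_obj by blast
  obtain k2 where k2: "c2 = H [k2] []" using c2 unfolding th ishom_obj by blast
  note k = k1 k2
  have "und (constH (T xs) k1) ! 0 = k1" "und (constH (T xs) k2) ! 0 = k2"
    by (simp_all only: und_constH[of 0 xs] le0)
  moreover have "constH (T xs) k1 = constH (T xs) k2" using e k s unfolding constH_def by simp
  ultimately have "k1 = k2" by metis
  then show "c1 = c2" using k by simp
qed

lemma JJ_inj:
  assumes a: "a \<in> fst (XJ \<theta>) s" and b: "b \<in> fst (XJ \<theta>) s" and e: "PhiJ s a = PhiJ s b"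
  shows "(a, b) \<in> qrel (RJ \<theta>) s"
proof (cases a)
  case (Inl p) then obtain x y where A: "a = Inl (x, y)" by (cases p) auto
  show ?thesis
  proof (cases b)
    case (Inl q) then obtain x' y' where B: "b = Inl (x', y')" by (cases q) auto
    have "x = x'" "IJ s y = IJ s y'" using e A B by (auto simp: PhiJ_def)
    moreover have "ishom s Ic y" "ishom s Ic y'" using a b A B by (auto simp: XJ_car)
    ultimately have "a = b" using IJ_inj A B by metis
    then show ?thesis by simp
  next
    case (Inr q) then obtain ob u where B: "b = Inr (ob, u)" by (cases q) auto
    have "x = comp ob (bang s)" "u = IJ s y" using e A B by (auto simp: PhiJ_def)
    moreover have "ob \<in> obs \<theta>" "ishom s Ic y" using a b A B by (auto simp: XJ_car)
    ultimately have "(a, b) \<in> RJ \<theta> s" unfolding RJ_mem A B by blast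
    then show ?thesis by (rule qrel_base)
  qed
next
  case (Inr p) then obtain ob u where A: "a = Inr (ob, u)" by (cases p) auto
  show ?thesis
  proof (cases b)
    case (Inl q) then obtain x y where B: "b = Inl (x, y)" by (cases q) auto
    have "x = comp ob (bang s)" "u = IJ s y" using e A B by (auto simp: PhiJ_def)
    moreover have "ob \<in> obs \<theta>" "ishom s Ic y" using a b A B by (auto simp: XJ_car)
    ultimately have "(b, a) \<in> RJ \<theta> s" unfolding RJ_mem A B by blast
    then show ?thesis by (rule qrel_base')
  next
    case (Inr q) then obtain ob' u' where B: "b = Inr (ob', u')" by (cases q) auto
    have "comp ob (bang s) = comp ob' (bang s)" "u = u'" using e A B by (auto simp: PhiJ_def)
    moreover have "ishom (T []) \<theta> ob" "ishom (T []) \<theta> ob'" using a b A B by (auto simp: XJ_car obs_ishom)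
    ultimately have "a = b" using const_inj A B by metis
    then show ?thesis by simp
  qed
qed

lemma JJ_iso: "isoP (JJ \<theta>) (Mpsh \<theta>) (qmap PhiJ)"
  unfolding JJ_quot
  by (rule quot_isoP[OF JJ_RX JJ_resp JJ_closed JJ_natural]) (simp_all add: JJ_surj Mpsh_def JJ_inj)



definition XT :: "tree \<Rightarrow> nat \<Rightarrow> (hom + (hom \<Rightarrow> bool)) psh" where
  "XT \<theta> i = sum_psh (rep (theta_i \<theta> i)) Jpsh"

definition RT :: "tree \<Rightarrow> nat \<Rightarrow> tree \<Rightarrow> ((hom + (hom \<Rightarrow> bool)) \<times> (hom + (hom \<Rightarrow> bool))) set" where
  "RT \<theta> i s = {(Inl ((\<lambda>s x. comp (e_i i) x) s c), Inr (IJ s c)) | c. c \<in> fst Ipsh s}"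

lemma thJ_quot: "thJ \<theta> i = quot_psh (XT \<theta> i) (RT \<theta> i)"
  unfolding thJ_def pushout_def XT_def RT_def ..

lemma XT_car: "fst (XT \<theta> i) s = {m. ishom s (theta_i \<theta> i) m} <+> (obs s \<rightarrow>\<^sub>E (UNIV :: bool set))"
  by (simp add: XT_def sum_psh_def rep_def Jpsh_def)

lemma XT_act_l: "snd (XT \<theta> i) s t m (Inl z) = Inl (comp z m)"
  by (simp add: XT_def sum_psh_def rep_def)

lemma XT_act_r: "snd (XT \<theta> i) s t m (Inr u) = Inr (restrict (\<lambda>oo. u (comp m oo)) (obs s))"
  by (simp add: XT_def sum_psh_def Jpsh_def)

lemma RT_mem: "(a, b) \<in> RT \<theta> i s \<longleftrightarrow> (\<exists>c. ishom s Ic c \<and> a = Inl (comp (e_i i) c) \<and> b = Inr (IJ s c))"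
  by (auto simp: RT_def Ipsh_def rep_def)

definition onum :: "hom \<Rightarrow> hom \<Rightarrow> nat" where
  "onum z oo = hd (und (comp z oo))"

lemma onum_obj: "onum z (H [k] []) = und z ! k"
  by (cases z) (simp add: onum_def comp_obj)

definition Psi :: "tree \<Rightarrow> nat \<Rightarrow> tree \<Rightarrow> (hom + (hom \<Rightarrow> bool)) \<Rightarrow> hom \<times> (hom \<Rightarrow> bool)" where
  "Psi \<theta> i s a = (case a of Inl z \<Rightarrow> (comp (sig (children \<theta>) i) z, restrict (\<lambda>oo. i < onum z oo) (obs s))
                          | Inr u \<Rightarrow> (comp (H [i] []) (bang s), u))"

lemma ch_T[simp]: "children (T ts) = ts" by (simp add: children_def)

lemma obj_ishom: "k \<le> length ts \<Longrightarrow> ishom (T []) (T ts) (H [k] [])"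
  by (simp add: ishom_obj)

lemma assoc_obj: "oo \<in> obs s \<Longrightarrow> ishom s t m \<Longrightarrow> ishom t u z \<Longrightarrow> comp (comp z m) oo = comp z (comp m oo)"
  unfolding obs_def using comp_assoc by (metis mem_Collect_eq)

lemma XT_RX: "i \<le> length ts \<Longrightarrow> RX (XT (T ts) i) (RT (T ts) i)"
  unfolding RX_def
proof (intro allI impI)
  fix s a b assume i: "i \<le> length ts" and "(a, b) \<in> RT (T ts) i s"
  then obtain c where c: "ishom s Ic c" "a = Inl (comp (e_i i) c)" "b = Inr (IJ s c)" unfolding RT_mem by blast
  have "ishom s (theta_i (T ts) i) (comp (e_i i) c)" using comp_ishom[OF c(1) e_ishom[OF i]] by (simp add: theta_i_T)
  then show "a \<in> fst (XT (T ts) i) s \<and> b \<in> fst (XT (T ts) i) s" using c IJ_in[of s c] by (simp add: XT_car)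
qed

lemma sig_e: "i \<le> length ts \<Longrightarrow> comp (sig ts i) (e_i i) = comp (H [i] []) (bang Ic)"
proof -
  assume i: "i \<le> length ts"
  have h1: "ishom (T [T []]) (T ts) (comp (sig ts i) (e_i i))"
    using comp_ishom[OF e_ishom[OF i] sig_ishom[OF i]] by (simp add: Ic_def)
  have h2: "ishom (T [T []]) (T ts) (comp (H [i] []) (bang Ic))"
    unfolding Ic_def by (rule comp_ishom[OF bang_ishom obj_ishom[OF i]])
  show ?thesis
  proof (rule hom_ext[OF h1 h2])
    show "und (comp (sig ts i) (e_i i)) = und (comp (H [i] []) (bang Ic))"
      using i by (simp add: und_comp' e_i_def und_sig Ic_def sgf_def)
    fix k j assume "k < length [T []]" "und (comp (sig ts i) (e_i i)) ! k \<le> j" "j < und (comp (sig ts i) (e_i i)) ! Suc k"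
    then show "cell (comp (sig ts i) (e_i i)) k j = cell (comp (H [i] []) (bang Ic)) k j"
      using i by (simp add: und_comp' e_i_def und_sig sgf_def)
  qed
qed

lemma IJ_T: "oo \<in> obs (T xs) \<Longrightarrow> \<exists>k\<le>length xs. oo = H [k] []"
  by (auto simp: obs_T)

lemma XT_resp: "i \<le> length ts \<Longrightarrow> resp (RT (T ts) i) (Psi (T ts) i)"
  unfolding resp_def
proof (intro allI impI)
  fix s a b assume i: "i \<le> length ts" and "(a, b) \<in> RT (T ts) i s"
  then obtain c where c: "ishom s Ic c" "a = Inl (comp (e_i i) c)" "b = Inr (IJ s c)" unfolding RT_mem by blast
  obtain xs where s: "s = T xs" by (cases s)
  have E: "ishom Ic (T (tsi ts i)) (e_i i)" using e_ishom[OF i] .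
  have e1: "comp (sig ts i) (comp (e_i i) c) = comp (H [i] []) (bang s)"
    using comp_assoc[OF c(1) E sig_ishom[OF i]] sig_e[OF i] comp_const_nat[OF obj_ishom[OF i] c(1)] by simp
  have e2: "restrict (\<lambda>oo. i < onum (comp (e_i i) c) oo) (obs s) = IJ s c"
  proof (rule ext)
    fix oo show "restrict (\<lambda>oo. i < onum (comp (e_i i) c) oo) (obs s) oo = IJ s c oo"
    proof (cases "oo \<in> obs s")
      case True
      then obtain k where k: "k \<le> length xs" "oo = H [k] []" using IJ_T s by blast
      have c': "ishom (T xs) (T [T []]) c" using c(1) s by (simp add: Ic_def)
      have ck: "und c ! k \<le> 1" using ishom_und[OF c'] k by auto
      have "onum (comp (e_i i) c) oo = [i, Suc i] ! (und c ! k)"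
        using k ishom_und(1)[OF c'] by (simp add: onum_obj und_comp' e_i_def)
      then have "(i < onum (comp (e_i i) c) oo) = (und c ! k = 1)" using ck by (cases "und c ! k") auto
      then show ?thesis using True k s IJ_val[OF k(1)] by simp
    qed (simp add: IJ_def)
  qed
  show "Psi (T ts) i s a = Psi (T ts) i s b" using c e1 e2 by (simp add: Psi_def)
qed

lemma XT_closed: "closed (XT \<theta> i)"
  unfolding closed_def
proof (intro allI impI)
  fix s t m a assume h: "ishom s t m \<and> a \<in> fst (XT \<theta> i) t"
  show "snd (XT \<theta> i) s t m a \<in> fst (XT \<theta> i) s"
    using h comp_ishom by (cases a) (auto simp: XT_car XT_act_l XT_act_r)
qed

lemma XT_natural: "i \<le> length ts \<Longrightarrow> natural (XT (T ts) i) (Mpsh (T ts)) (Psi (T ts) i)"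
  unfolding natural_def
proof (intro allI impI)
  fix s t m a assume i: "i \<le> length ts" and h: "ishom s t m \<and> a \<in> fst (XT (T ts) i) t"
  show "Psi (T ts) i s (snd (XT (T ts) i) s t m a) = snd (Mpsh (T ts)) s t m (Psi (T ts) i t a)"
  proof (cases a)
    case (Inl z)
    then have z: "ishom t (T (tsi ts i)) z" using h by (simp add: XT_car theta_i_T)
    have e1: "comp (sig ts i) (comp z m) = comp (comp (sig ts i) z) m"
      using comp_assoc[OF _ z sig_ishom[OF i]] h by blast
    have e2: "restrict (\<lambda>oo. i < onum (comp z m) oo) (obs s) =
        restrict (\<lambda>oo. restrict (\<lambda>oo. i < onum z oo) (obs t) (comp m oo)) (obs s)"
    proof (rule restrict_ext)
      fix oo assume oo: "oo \<in> obs s"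
      then show "(i < onum (comp z m) oo) = restrict (\<lambda>oo. i < onum z oo) (obs t) (comp m oo)"
        using obs_comp[OF _ oo] h assoc_obj[OF oo _ z] by (simp add: onum_def)
    qed
    show ?thesis using Inl e1 e2 by (simp add: XT_act_l Psi_def Mact)
  next
    case (Inr u)
    have "comp (comp (H [i] []) (bang t)) m = comp (H [i] []) (bang s)"
      using comp_const_nat[OF obj_ishom[OF i]] h by blast
    then show ?thesis using Inr by (simp add: XT_act_r Psi_def Mact)
  qed
qed

lemma IJ_rho:
  assumes i: "i \<le> length ts" and z: "ishom s (T (tsi ts i)) z"
  shows "IJ s (comp (rhoH ts i) z) = restrict (\<lambda>oo. i < onum z oo) (obs s)"
proof (rule ext)
  obtain xs where s: "s = T xs" by (cases s)
  fix oo show "IJ s (comp (rhoH ts i) z) oo = restrict (\<lambda>oo. i < onum z oo) (obs s) oo"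
  proof (cases "oo \<in> obs s")
    case True
    then obtain k where k: "k \<le> length xs" "oo = H [k] []" using IJ_T s by blast
    have z': "ishom (T xs) (T (tsi ts i)) z" using z s by simp
    have zk: "und z ! k \<le> Suc (length ts)" using ishom_und[OF z'] k i by auto
    have "IJ s (comp (rhoH ts i) z) oo = (und (comp (rhoH ts i) z) ! k = 1)" using IJ_val[OF k(1)] k s by simp
    also have "\<dots> = (i < und z ! k)" using zk ishom_und(1)[OF z'] k by (simp add: und_comp' und_rho)
    finally show ?thesis using True k by (simp add: onum_obj)
  qed (simp add: IJ_def)
qed

lemma Psi_in:
  assumes i: "i \<le> length ts" and a: "a \<in> fst (XT (T ts) i) s"
  shows "Psi (T ts) i s a \<in> Mset (T ts) s"
proof (cases a)
  case (Inl z)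
  then have z: "ishom s (T (tsi ts i)) z" using a by (simp add: XT_car theta_i_T)
  have y: "ishom s Ic (comp (rhoH ts i) z)" using comp_ishom[OF z rho_ishom[OF i]] .
  show ?thesis using Inl comp_ishom[OF z sig_ishom[OF i]] IJ_rho[OF i z] y unfolding Mset_def Psi_def
    by auto
next
  case (Inr u)
  then have "u \<in> obs s \<rightarrow>\<^sub>E (UNIV :: bool set)" using a by (simp add: XT_car)
  then show ?thesis using Inr comp_ishom[OF bang_ishom obj_ishom[OF i]] obj_ishom[OF i] unfolding Mset_def Psi_def
    by auto
qed



lemma Dzig_car: "fst (Dzig \<theta>) s = {(i, Inl y) | i y. i \<le> length (children \<theta>) \<and> y \<in> fst (thJ \<theta> i) s}
                 \<union> {(i, Inr x) | i x. i < length (children \<theta>) \<and> ishom s \<theta> x}"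
  by (simp add: Dzig_def rep_def)

lemma Dzig_act_l: "snd (Dzig \<theta>) s t m (i, Inl y) = (i, Inl (snd (thJ \<theta> i) s t m y))"
  by (simp add: Dzig_def)

lemma Dzig_act_r: "snd (Dzig \<theta>) s t m (i, Inr x) = (i, Inr (comp x m))"
  by (simp add: Dzig_def rep_def)

lemma Rzig_mem: "(a, b) \<in> Rzig \<theta> s \<longleftrightarrow> (\<exists>i x. i < length (children \<theta>) \<and> ishom s \<theta> x \<and> a = (i, Inr x) \<and>
    (b = (i, Inl (phi \<theta> i s (comp (alpha \<theta> i) x))) \<or> b = (Suc i, Inl (phi \<theta> (Suc i) s (comp (beta \<theta> (Suc i)) x)))))"
  unfolding Rzig_def rep_def by auto

definition PhiZ :: "tree \<Rightarrow> tree \<Rightarrow> nat \<times> ((hom + (hom \<Rightarrow> bool)) set + hom) \<Rightarrow> hom \<times> (hom \<Rightarrow> bool)" where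
  "PhiZ \<theta> s a = (case a of (i, Inl Q) \<Rightarrow> qmap (Psi \<theta> i) s Q
                        | (i, Inr x) \<Rightarrow> (x, restrict (\<lambda>oo. i < onum x oo) (obs s)))"

lemma thJ_car: "fst (thJ \<theta> i) s = fst (XT \<theta> i) s // qrel (RT \<theta> i) s"
  by (simp add: thJ_quot quot_carrier)

lemma phi_eq: "i \<le> length ts \<Longrightarrow> ishom s (T (tsi ts i)) w \<Longrightarrow>
   phi (T ts) i s w = qrel (RT (T ts) i) s `` {Inl w}"
  unfolding phi_def thJ_quot
  by (rule cls_eq[OF XT_RX]) (simp_all add: XT_car theta_i_T)

lemma class_thJ: "i \<le> length ts \<Longrightarrow> a \<in> fst (XT (T ts) i) s \<Longrightarrow> qrel (RT (T ts) i) s `` {a} \<in> fst (thJ (T ts) i) s"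
  unfolding thJ_quot by (rule class_in)

lemma qmap_Psi: "i \<le> length ts \<Longrightarrow> a \<in> fst (XT (T ts) i) s \<Longrightarrow>
   qmap (Psi (T ts) i) s (qrel (RT (T ts) i) s `` {a}) = Psi (T ts) i s a"
  by (rule qmap_class[OF XT_RX XT_resp])

lemma Psi_ins:
  assumes x: "ishom (T xs) (T ts) x" and i: "i \<le> length ts" and sk: "sk = i \<or> sk = Suc i"
  shows "Psi (T ts) i (T xs) (Inl (comp (ins_map (T ts) i sk) x)) = (x, restrict (\<lambda>oo. sk \<le> onum x oo) (obs (T xs)))"
proof -
  define G where "G = (\<lambda>k. sk \<le> und x ! k)"
  note cl = comp_ins_lift[OF x i sk, folded G_def]
  have e1: "comp (sig ts i) (comp (ins_map (T ts) i sk) x) = x"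
    using cl(3) comp_sig_lift[OF x i cl(1,2)] by simp
  have e2: "restrict (\<lambda>oo. i < onum (comp (ins_map (T ts) i sk) x) oo) (obs (T xs)) = restrict (\<lambda>oo. sk \<le> onum x oo) (obs (T xs))"
  proof (rule restrict_ext)
    fix oo assume "oo \<in> obs (T xs)"
    then obtain k where k: "k \<le> length xs" "oo = H [k] []" using IJ_T by blast
    show "(i < onum (comp (ins_map (T ts) i sk) x) oo) = (sk \<le> onum x oo)"
      using k cl(3) und_liftH[OF k(1)] sk by (auto simp: onum_obj G_def)
  qed
  show ?thesis using e1 e2 by (simp add: Psi_def)
qed

lemma alpha_ishom: "i < length ts \<Longrightarrow> ishom (T ts) (T (tsi ts i)) (alpha (T ts) i)"
  unfolding alpha_ins by (rule ins_map_ishom) auto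

lemma beta_ishom: "i \<le> length ts \<Longrightarrow> ishom (T ts) (T (tsi ts i)) (beta (T ts) i)"
  unfolding beta_ins by (rule ins_map_ishom) auto

lemma Z_RX: "RX (Dzig (T ts)) (Rzig (T ts))"
  unfolding RX_def
proof (intro allI impI)
  fix s a b assume "(a, b) \<in> Rzig (T ts) s"
  then obtain i x where h: "i < length ts" "ishom s (T ts) x" "a = (i, Inr x)"
    "b = (i, Inl (phi (T ts) i s (comp (alpha (T ts) i) x))) \<or> b = (Suc i, Inl (phi (T ts) (Suc i) s (comp (beta (T ts) (Suc i)) x)))"
    unfolding Rzig_mem by auto
  have w1: "ishom s (T (tsi ts i)) (comp (alpha (T ts) i) x)" using comp_ishom[OF h(2) alpha_ishom[OF h(1)]] .
  have w2: "ishom s (T (tsi ts (Suc i))) (comp (beta (T ts) (Suc i)) x)" using comp_ishom[OF h(2) beta_ishom] h(1) by simp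
  have "phi (T ts) i s (comp (alpha (T ts) i) x) \<in> fst (thJ (T ts) i) s"
    using phi_eq[OF _ w1] class_thJ[of i ts "Inl (comp (alpha (T ts) i) x)" s] h(1) w1 by (simp add: XT_car theta_i_T)
  moreover have "phi (T ts) (Suc i) s (comp (beta (T ts) (Suc i)) x) \<in> fst (thJ (T ts) (Suc i)) s"
    using phi_eq[OF _ w2] class_thJ[of "Suc i" ts "Inl (comp (beta (T ts) (Suc i)) x)" s] h(1) w2 by (simp add: XT_car theta_i_T)
  ultimately show "a \<in> fst (Dzig (T ts)) s \<and> b \<in> fst (Dzig (T ts)) s"
    using h by (auto simp: Dzig_car)
qed

lemma Z_resp: "resp (Rzig (T ts)) (PhiZ (T ts))"
  unfolding resp_def
proof (intro allI impI)
  fix s a b assume "(a, b) \<in> Rzig (T ts) s"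
  then obtain i x where h: "i < length ts" "ishom s (T ts) x" "a = (i, Inr x)"
    "b = (i, Inl (phi (T ts) i s (comp (alpha (T ts) i) x))) \<or> b = (Suc i, Inl (phi (T ts) (Suc i) s (comp (beta (T ts) (Suc i)) x)))"
    unfolding Rzig_mem by auto
  obtain xs where s: "s = T xs" by (cases s)
  have x: "ishom (T xs) (T ts) x" using h(2) s by simp
  have w1: "ishom s (T (tsi ts i)) (comp (alpha (T ts) i) x)" using comp_ishom[OF h(2) alpha_ishom[OF h(1)]] .
  have w2: "ishom s (T (tsi ts (Suc i))) (comp (beta (T ts) (Suc i)) x)" using comp_ishom[OF h(2) beta_ishom] h(1) by simp
  have r: "restrict (\<lambda>oo. Suc i \<le> onum x oo) (obs s) = restrict (\<lambda>oo. i < onum x oo) (obs s)"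
    by (rule restrict_ext) auto
  have PA: "PhiZ (T ts) s a = (x, restrict (\<lambda>oo. i < onum x oo) (obs s))" using h(3) by (simp add: PhiZ_def)
  show "PhiZ (T ts) s a = PhiZ (T ts) s b"
    using h(4)
  proof
    assume b: "b = (i, Inl (phi (T ts) i s (comp (alpha (T ts) i) x)))"
    have "PhiZ (T ts) s b = Psi (T ts) i s (Inl (comp (alpha (T ts) i) x))"
      using b phi_eq[OF _ w1] qmap_Psi[of i ts "Inl (comp (alpha (T ts) i) x)" s] h(1) w1
      by (simp add: PhiZ_def XT_car theta_i_T)
    also have "\<dots> = (x, restrict (\<lambda>oo. Suc i \<le> onum x oo) (obs s))"
      using Psi_ins[OF x, of i "Suc i"] h(1) s by (simp add: alpha_ins)
    finally show ?thesis using PA r by simp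
  next
    assume b: "b = (Suc i, Inl (phi (T ts) (Suc i) s (comp (beta (T ts) (Suc i)) x)))"
    have "PhiZ (T ts) s b = Psi (T ts) (Suc i) s (Inl (comp (beta (T ts) (Suc i)) x))"
      using b phi_eq[OF _ w2] qmap_Psi[of "Suc i" ts "Inl (comp (beta (T ts) (Suc i)) x)" s] h(1) w2
      by (simp add: PhiZ_def XT_car theta_i_T)
    also have "\<dots> = (x, restrict (\<lambda>oo. Suc i \<le> onum x oo) (obs s))"
      using Psi_ins[OF x, of "Suc i" "Suc i"] h(1) s by (simp add: beta_ins)
    finally show ?thesis using PA r by simp
  qed
qed

lemma thJ_closed: "i \<le> length ts \<Longrightarrow> closed (thJ (T ts) i)"
  unfolding thJ_quot by (rule quot_closed[OF XT_RX XT_closed])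

lemma Z_closed: "closed (Dzig (T ts))"
  unfolding closed_def
proof (intro allI impI)
  fix s t m a assume h: "ishom s t m \<and> a \<in> fst (Dzig (T ts)) t"
  show "snd (Dzig (T ts)) s t m a \<in> fst (Dzig (T ts)) s"
  proof (cases a)
    case (Pair i z)
    show ?thesis
    proof (cases z)
      case (Inl y)
      then have "i \<le> length ts" "y \<in> fst (thJ (T ts) i) t" using h Pair by (auto simp: Dzig_car)
      then have "snd (thJ (T ts) i) s t m y \<in> fst (thJ (T ts) i) s" using thJ_closed h unfolding closed_def by blast
      then show ?thesis using Pair Inl \<open>i \<le> length ts\<close> by (simp add: Dzig_act_l Dzig_car)
    next
      case (Inr x)
      then have "i < length ts" "ishom t (T ts) x" using h Pair by (auto simp: Dzig_car)
      then show ?thesis using Pair Inr h comp_ishom by (simp add: Dzig_act_r Dzig_car)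
    qed
  qed
qed

lemma Z_natural: "natural (Dzig (T ts)) (Mpsh (T ts)) (PhiZ (T ts))"
  unfolding natural_def
proof (intro allI impI)
  fix s t m a assume h: "ishom s t m \<and> a \<in> fst (Dzig (T ts)) t"
  show "PhiZ (T ts) s (snd (Dzig (T ts)) s t m a) = snd (Mpsh (T ts)) s t m (PhiZ (T ts) t a)"
  proof (cases a)
    case (Pair i z)
    show ?thesis
    proof (cases z)
      case (Inl y)
      then have i: "i \<le> length ts" and y: "y \<in> fst (thJ (T ts) i) t" using h Pair by (auto simp: Dzig_car)
      have "natural (thJ (T ts) i) (Mpsh (T ts)) (qmap (Psi (T ts) i))"
        unfolding thJ_quot by (rule qmap_natural[OF XT_RX[OF i] XT_resp[OF i] XT_closed XT_natural[OF i]])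
      then show ?thesis using Pair Inl h y unfolding natural_def by (simp add: Dzig_act_l PhiZ_def)
    next
      case (Inr x)
      then have x: "ishom t (T ts) x" using h Pair by (auto simp: Dzig_car)
      have e2: "restrict (\<lambda>oo. i < onum (comp x m) oo) (obs s) =
          restrict (\<lambda>oo. restrict (\<lambda>oo. i < onum x oo) (obs t) (comp m oo)) (obs s)"
      proof (rule restrict_ext)
        fix oo assume oo: "oo \<in> obs s"
        then show "(i < onum (comp x m) oo) = restrict (\<lambda>oo. i < onum x oo) (obs t) (comp m oo)"
          using obs_comp[OF _ oo] h assoc_obj[OF oo _ x] by (simp add: onum_def)
      qed
      show ?thesis using Pair Inr e2 by (simp add: Dzig_act_r PhiZ_def Mact)
    qed
  qed
qed

lemma PhiZ_Inl_class: "i \<le> length ts \<Longrightarrow> a \<in> fst (XT (T ts) i) s \<Longrightarrow>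
   PhiZ (T ts) s (i, Inl (qrel (RT (T ts) i) s `` {a})) = Psi (T ts) i s a"
  by (simp add: PhiZ_def qmap_Psi)

lemma IJ_G_mono: "ishom (T xs) Ic y \<Longrightarrow> Gmono (\<lambda>k. und y ! k = 1) xs"
  unfolding Gmono_def
proof (intro allI impI)
  fix a b assume y: "ishom (T xs) Ic y" and ab: "a \<le> b" "b \<le> length xs" "und y ! a = 1"
  have y': "ishom (T xs) (T [T []]) y" using y by (simp add: Ic_def)
  note yu = ishom_und[OF y']
  have "und y ! a \<le> und y ! b" using sorted_nth_mono[OF yu(3) ab(1)] yu(1) ab(2) by simp
  moreover have "und y ! b \<le> 1" using yu(1,2) ab by auto
  ultimately show "und y ! b = 1" using ab by simp
qed

lemma exists_valid:
  assumes x: "ishom (T xs) (T ts) x" and G: "Gmono G xs"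
  shows "\<exists>i\<le>length ts. valid i G xs x"
proof (cases "\<exists>k\<le>length xs. G k")
  case False
  have "valid (length ts) G xs x" using False ishom_und[OF x] unfolding valid_def by auto
  then show ?thesis by blast
next
  case True
  define k0 where "k0 = (LEAST k. k \<le> length xs \<and> G k)"
  have "k0 \<le> length xs \<and> G k0" unfolding k0_def by (rule LeastI_ex) (use True in blast)
  then have k0: "k0 \<le> length xs" "G k0" by auto
  have k0min: "\<And>k. k \<le> length xs \<Longrightarrow> G k \<Longrightarrow> k0 \<le> k" unfolding k0_def by (simp add: Least_le)
  note xu = ishom_und[OF x]
  have mono: "\<And>a b. a \<le> b \<Longrightarrow> b \<le> length xs \<Longrightarrow> und x ! a \<le> und x ! b"
    using xu by (auto simp: sorted_iff_nth_mono)
  have "valid (und x ! k0) G xs x" unfolding valid_def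
  proof (intro allI impI)
    fix k assume k: "k \<le> length xs"
    have A: "\<not> G k \<longrightarrow> und x ! k \<le> und x ! k0"
    proof
      assume nG: "\<not> G k"
      have "k < k0" using G k k0 nG unfolding Gmono_def by (metis not_le)
      then show "und x ! k \<le> und x ! k0" using mono k0 by simp
    qed
    have B: "G k \<longrightarrow> und x ! k0 \<le> und x ! k" using k0min k mono by blast
    show "(\<not> G k \<longrightarrow> und x ! k \<le> und x ! k0) \<and> (G k \<longrightarrow> und x ! k0 \<le> und x ! k)" using A B by blast
  qed
  moreover have "und x ! k0 \<le> length ts" using xu k0 by auto
  ultimately show ?thesis by blast
qed

lemma Z_surj: "PhiZ (T ts) s ` fst (Dzig (T ts)) s = Mset (T ts) s"
proof
  show "PhiZ (T ts) s ` fst (Dzig (T ts)) s \<subseteq> Mset (T ts) s"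
  proof
    fix w assume "w \<in> PhiZ (T ts) s ` fst (Dzig (T ts)) s"
    then obtain a where a: "a \<in> fst (Dzig (T ts)) s" "w = PhiZ (T ts) s a" by blast
    have inl: "PhiZ (T ts) s (i, Inl Q) \<in> Mset (T ts) s" if i: "i \<le> length ts" and Q: "Q \<in> fst (thJ (T ts) i) s" for i Q
    proof -
      obtain b where b: "b \<in> fst (XT (T ts) i) s" "Q = qrel (RT (T ts) i) s `` {b}"
        using quot_elem[OF XT_RX[OF i]] Q unfolding thJ_quot by metis
      then show ?thesis using PhiZ_Inl_class[OF i b(1)] Psi_in[OF i b(1)] by simp
    qed
    show "w \<in> Mset (T ts) s"
    proof (cases a)
      case (Pair i z)
      show ?thesis
      proof (cases z)
        case (Inl Q) then show ?thesis using a Pair inl by (auto simp: Dzig_car)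
      next
        case (Inr x)
        then have h: "i < length ts" "ishom s (T ts) x" using a Pair by (auto simp: Dzig_car)
        define b :: "nat \<times> ((hom + (hom \<Rightarrow> bool)) set + hom)" where "b = (i, Inl (phi (T ts) i s (comp (alpha (T ts) i) x)))"
        have ab: "(a, b) \<in> Rzig (T ts) s" unfolding Rzig_mem b_def using h Pair Inr by auto
        have "PhiZ (T ts) s a = PhiZ (T ts) s b" using Z_resp ab unfolding resp_def by blast
        moreover have "b \<in> fst (Dzig (T ts)) s" using Z_RX ab unfolding RX_def by blast
        ultimately show ?thesis using a inl unfolding b_def by (auto simp: Dzig_car)
      qed
    qed
  qed
next
  show "Mset (T ts) s \<subseteq> PhiZ (T ts) s ` fst (Dzig (T ts)) s"
  proof
    fix w assume w: "w \<in> Mset (T ts) s"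
    obtain xs where s: "s = T xs" by (cases s)
    obtain x u where wxu: "w = (x, u)" by (cases w)
    from w wxu have x: "ishom s (T ts) x" and u: "u \<in> obs s \<rightarrow>\<^sub>E (UNIV :: bool set)"
      and d: "(\<exists>c. ishom (T []) (T ts) c \<and> x = comp c (bang s)) \<or> (\<exists>y. ishom s Ic y \<and> u = IJ s y)"
      by (auto simp: Mset_def)
    from d show "w \<in> PhiZ (T ts) s ` fst (Dzig (T ts)) s"
    proof
      assume "\<exists>c. ishom (T []) (T ts) c \<and> x = comp c (bang s)"
      then obtain c where c: "ishom (T []) (T ts) c" "x = comp c (bang s)" by blast
      then obtain k where k: "k \<le> length ts" "c = H [k] []" unfolding ishom_obj by blast
      have ua: "Inr u \<in> fst (XT (T ts) k) s" using u by (simp add: XT_car)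
      define a :: "nat \<times> ((hom + (hom \<Rightarrow> bool)) set + hom)" where "a = (k, Inl (qrel (RT (T ts) k) s `` {Inr u}))"
      have "a \<in> fst (Dzig (T ts)) s" using class_thJ[OF k(1) ua] k(1) unfolding a_def by (simp add: Dzig_car)
      moreover have "PhiZ (T ts) s a = w"
        unfolding a_def using PhiZ_Inl_class[OF k(1) ua] c k wxu by (simp add: Psi_def)
      ultimately show ?thesis by (metis image_eqI)
    next
      assume "\<exists>y. ishom s Ic y \<and> u = IJ s y"
      then obtain y where y: "ishom s Ic y" "u = IJ s y" by blast
      define G where "G = (\<lambda>k. und y ! k = 1)"
      have x': "ishom (T xs) (T ts) x" using x s by simp
      have Gm: "Gmono G xs" using IJ_G_mono y s unfolding G_def by simp
      obtain i where i: "i \<le> length ts" "valid i G xs x" using exists_valid[OF x' Gm] by blast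
      define z where "z = liftH i G xs x"
      have z: "ishom (T xs) (T (tsi ts i)) z" unfolding z_def by (rule lift_ishom[OF x' i(1) i(2) Gm])
      have za: "Inl z \<in> fst (XT (T ts) i) s" using z s by (simp add: XT_car theta_i_T)
      define a :: "nat \<times> ((hom + (hom \<Rightarrow> bool)) set + hom)" where "a = (i, Inl (qrel (RT (T ts) i) s `` {Inl z}))"
      have "a \<in> fst (Dzig (T ts)) s" using class_thJ[OF i(1) za] i(1) unfolding a_def by (simp add: Dzig_car)
      moreover have "PhiZ (T ts) s a = w"
      proof -
        have e1: "comp (sig ts i) z = x" unfolding z_def by (rule comp_sig_lift[OF x' i(1) i(2) Gm])
        have e2: "restrict (\<lambda>oo. i < onum z oo) (obs s) = u"
        proof (rule ext)
          fix oo show "restrict (\<lambda>oo. i < onum z oo) (obs s) oo = u oo"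
          proof (cases "oo \<in> obs s")
            case True
            then obtain k where k: "k \<le> length xs" "oo = H [k] []" using IJ_T s by blast
            have vk: "(\<not> G k \<longrightarrow> und x ! k \<le> i) \<and> (G k \<longrightarrow> i \<le> und x ! k)" using i(2) k unfolding valid_def by auto
            have "(i < onum z oo) = G k" using k vk unfolding z_def by (auto simp: onum_obj und_liftH)
            then show ?thesis using True y(2) k s IJ_val[OF k(1)] G_def by simp
          next
            case False then show ?thesis using y(2) by (simp add: IJ_def)
          qed
        qed
        show ?thesis unfolding a_def using PhiZ_Inl_class[OF i(1) za] e1 e2 wxu by (simp add: Psi_def)
      qed
      ultimately show ?thesis by (metis image_eqI)
    qed
  qed
qed

definition LL :: "tree list \<Rightarrow> nat \<Rightarrow> (nat \<Rightarrow> bool) \<Rightarrow> tree list \<Rightarrow> hom \<Rightarrow> nat \<times> ((hom + (hom \<Rightarrow> bool)) set + hom)" where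
  "LL ts i G xs x = (i, Inl (qrel (RT (T ts) i) (T xs) `` {Inl (liftH i G xs x)}))"

lemma liftH_cong: "(\<And>k. k \<le> length xs \<Longrightarrow> G k = G' k) \<Longrightarrow> liftH i G xs x = liftH i G' xs x"
  unfolding liftH_def mkH_def by (simp del: upt_Suc)

lemma valid_cong: "(\<And>k. k \<le> length xs \<Longrightarrow> G k = G' k) \<Longrightarrow> valid i G xs x = valid i G' xs x"
  unfolding valid_def by auto

lemma Gmono_cong: "(\<And>k. k \<le> length xs \<Longrightarrow> G k = G' k) \<Longrightarrow> Gmono G xs = Gmono G' xs"
  unfolding Gmono_def by auto

lemma valid_convex: assumes "valid i G xs x" "valid j G xs x" "i \<le> k" "k \<le> j" shows "valid k G xs x"
  unfolding valid_def
proof (intro allI impI)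
  fix l assume l: "l \<le> length xs"
  have "(\<not> G l \<longrightarrow> und x ! l \<le> i) \<and> (G l \<longrightarrow> j \<le> und x ! l)" using assms(1,2) l unfolding valid_def by blast
  then show "(\<not> G l \<longrightarrow> und x ! l \<le> k) \<and> (G l \<longrightarrow> k \<le> und x ! l)" using assms(3,4) by auto
qed

lemma chain_step:
  assumes x: "ishom (T xs) (T ts) x" and i: "Suc i \<le> length ts"
    and v1: "valid i G xs x" and v2: "valid (Suc i) G xs x"
  shows "(LL ts i G xs x, LL ts (Suc i) G xs x) \<in> qrel (Rzig (T ts)) (T xs)"
proof -
  have Gk: "G k = (Suc i \<le> und x ! k)" if k: "k \<le> length xs" for k
  proof -
    have "(\<not> G k \<longrightarrow> und x ! k \<le> i) \<and> (G k \<longrightarrow> Suc i \<le> und x ! k)" using v1 v2 k unfolding valid_def by blast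
    then show ?thesis by auto
  qed
  have lc1: "liftH i G xs x = liftH i (\<lambda>k. Suc i \<le> und x ! k) xs x" by (rule liftH_cong) (rule Gk)
  have lc2: "liftH (Suc i) G xs x = liftH (Suc i) (\<lambda>k. Suc i \<le> und x ! k) xs x" by (rule liftH_cong) (rule Gk)
  have c1: "comp (ins_map (T ts) i (Suc i)) x = liftH i (\<lambda>k. Suc i \<le> und x ! k) xs x"
    by (rule comp_ins_lift(3)[OF x]) (use i in auto)
  have c2: "comp (ins_map (T ts) (Suc i) (Suc i)) x = liftH (Suc i) (\<lambda>k. Suc i \<le> und x ! k) xs x"
    by (rule comp_ins_lift(3)[OF x]) (use i in auto)
  have l1: "liftH i G xs x = comp (alpha (T ts) i) x" unfolding alpha_ins lc1 c1 ..
  have l2: "liftH (Suc i) G xs x = comp (beta (T ts) (Suc i)) x" unfolding beta_ins lc2 c2 ..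
  have w1: "ishom (T xs) (T (tsi ts i)) (comp (alpha (T ts) i) x)" using comp_ishom[OF x alpha_ishom] i by simp
  have w2: "ishom (T xs) (T (tsi ts (Suc i))) (comp (beta (T ts) (Suc i)) x)" using comp_ishom[OF x beta_ishom[OF i]] .
  have p1: "LL ts i G xs x = (i, Inl (phi (T ts) i (T xs) (comp (alpha (T ts) i) x)))"
    unfolding LL_def l1 using phi_eq[OF _ w1] i by simp
  have p2: "LL ts (Suc i) G xs x = (Suc i, Inl (phi (T ts) (Suc i) (T xs) (comp (beta (T ts) (Suc i)) x)))"
    unfolding LL_def l2 using phi_eq[OF i w2] by simp
  have r1: "((i, Inr x), LL ts i G xs x) \<in> Rzig (T ts) (T xs)" unfolding p1 Rzig_mem
    by (intro exI[of _ i] exI[of _ x]) (use i x in simp)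
  have r2: "((i, Inr x), LL ts (Suc i) G xs x) \<in> Rzig (T ts) (T xs)" unfolding p2 Rzig_mem
    by (intro exI[of _ i] exI[of _ x]) (use i x in simp)
  have q1: "(LL ts i G xs x, (i, Inr x)) \<in> qrel (Rzig (T ts)) (T xs)" using r1 by (rule qrel_base')
  have q2: "((i, Inr x), LL ts (Suc i) G xs x) \<in> qrel (Rzig (T ts)) (T xs)" using r2 by (rule qrel_base)
  show ?thesis using qrel_trans[OF q1 q2] .
qed

lemma chain_up:
  assumes x: "ishom (T xs) (T ts) x" and j: "i + d \<le> length ts"
    and v1: "valid i G xs x" and v2: "valid (i + d) G xs x"
  shows "(LL ts i G xs x, LL ts (i + d) G xs x) \<in> qrel (Rzig (T ts)) (T xs)"
  using j v2
proof (induction d)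
  case 0 then show ?case by simp
next
  case (Suc d)
  have vd: "valid (i + d) G xs x" using valid_convex[OF v1 Suc.prems(2)] by simp
  have "(LL ts i G xs x, LL ts (i + d) G xs x) \<in> qrel (Rzig (T ts)) (T xs)" using Suc.IH Suc.prems vd by simp
  moreover have "(LL ts (i + d) G xs x, LL ts (Suc (i + d)) G xs x) \<in> qrel (Rzig (T ts)) (T xs)"
    using chain_step[OF x _ vd] Suc.prems by simp
  ultimately have "(LL ts i G xs x, LL ts (Suc (i + d)) G xs x) \<in> qrel (Rzig (T ts)) (T xs)" by (rule qrel_trans)
  then show ?case by simp
qed

lemma chain:
  assumes x: "ishom (T xs) (T ts) x" and i: "i \<le> length ts" and j: "j \<le> length ts"
    and v1: "valid i G xs x" and v2: "valid j G xs x"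
  shows "(LL ts i G xs x, LL ts j G xs x) \<in> qrel (Rzig (T ts)) (T xs)"
proof (cases "i \<le> j")
  case True
  then show ?thesis using chain_up[OF x, of i "j - i" G] j v1 v2 by simp
next
  case False
  then have "(LL ts j G xs x, LL ts i G xs x) \<in> qrel (Rzig (T ts)) (T xs)"
    using chain_up[OF x, of j "i - j" G] i v1 v2 by simp
  then show ?thesis by (rule qrel_sym)
qed

lemma const_LL:
  assumes y: "ishom (T xs) Ic y" and c: "c \<le> length ts" and G: "\<And>k. k \<le> length xs \<Longrightarrow> G k = (und y ! k = 1)"
  shows "LL ts c G xs (constH (T xs) c) = (c, Inl (qrel (RT (T ts) c) (T xs) `` {Inr (IJ (T xs) y)}))"
proof -
  have l: "liftH c G xs (constH (T xs) c) = comp (e_i c) y"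
    using comp_e_lift(3)[OF y c] liftH_cong[of xs G "\<lambda>k. und y ! k = 1"] G by simp
  have "(Inl (comp (e_i c) y), Inr (IJ (T xs) y)) \<in> RT (T ts) c (T xs)" using y unfolding RT_mem by blast
  then have "(Inl (comp (e_i c) y), Inr (IJ (T xs) y)) \<in> qrel (RT (T ts) c) (T xs)" by (rule qrel_base)
  then have "qrel (RT (T ts) c) (T xs) `` {Inl (comp (e_i c) y)} = qrel (RT (T ts) c) (T xs) `` {Inr (IJ (T xs) y)}"
    by (rule qrel_class_eq)
  then show ?thesis unfolding LL_def l by simp
qed

lemma constH_inj: assumes e: "constH (T xs) c = constH (T xs) c'" shows "c = c'"
proof -
  have "c = und (constH (T xs) c) ! 0" by (simp only: und_constH[of 0 xs c] le0)
  also have "\<dots> = und (constH (T xs) c') ! 0" by (simp only: e)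
  also have "\<dots> = c'" by (simp only: und_constH[of 0 xs c'] le0)
  finally show ?thesis .
qed

definition NF :: "tree list \<Rightarrow> tree list \<Rightarrow> nat \<times> ((hom + (hom \<Rightarrow> bool)) set + hom) \<Rightarrow> bool" where
  "NF ts xs a = (let (x, u) = PhiZ (T ts) (T xs) a; Gu = (\<lambda>k. u (H [k] [])) in
     (\<exists>c\<le>length ts. x = constH (T xs) c \<and> (a, (c, Inl (qrel (RT (T ts) c) (T xs) `` {Inr u}))) \<in> qrel (Rzig (T ts)) (T xs))
   \<or> (\<exists>i\<le>length ts. valid i Gu xs x \<and> Gmono Gu xs \<and> ishom (T xs) (T ts) x \<and> (\<exists>y. ishom (T xs) Ic y \<and> u = IJ (T xs) y)
        \<and> (a, LL ts i Gu xs x) \<in> qrel (Rzig (T ts)) (T xs)))"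

lemma NF_Inl:
  assumes i: "i \<le> length ts" and Q: "Q \<in> fst (thJ (T ts) i) (T xs)"
  shows "NF ts xs (i, Inl Q)"
proof -
  obtain b where b: "b \<in> fst (XT (T ts) i) (T xs)" "Q = qrel (RT (T ts) i) (T xs) `` {b}"
    using quot_elem[OF XT_RX[OF i]] Q unfolding thJ_quot by metis
  have Ph: "PhiZ (T ts) (T xs) (i, Inl Q) = Psi (T ts) i (T xs) b" using PhiZ_Inl_class[OF i b(1)] b(2) by simp
  show ?thesis
  proof (cases b)
    case (Inr u0)
    have PZ: "PhiZ (T ts) (T xs) (i, Inl Q) = (constH (T xs) i, u0)" using Ph Inr by (simp add: Psi_def constH_def)
    show ?thesis
      apply (simp only: NF_def PZ Let_def prod.case)
      apply (rule disjI1)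
      using i b(2) Inr by auto
  next
    case (Inl z)
    have z: "ishom (T xs) (T (tsi ts i)) z" using b(1) Inl by (simp add: XT_car theta_i_T)
    define x where "x = comp (sig ts i) z"
    define u where "u = restrict (\<lambda>oo. i < onum z oo) (obs (T xs))"
    define G' where "G' = (\<lambda>k. i < und z ! k)"
    have PZ: "PhiZ (T ts) (T xs) (i, Inl Q) = (x, u)" using Ph Inl unfolding x_def u_def by (simp add: Psi_def)
    have GG: "(\<lambda>k. u (H [k] [])) k = G' k" if "k \<le> length xs" for k
      using that unfolding u_def G'_def by (simp add: obs_T onum_obj)
    note lu = lift_unique[OF z i, folded G'_def x_def]
    have v: "valid i (\<lambda>k. u (H [k] [])) xs x" using lu(1) valid_cong[of xs "\<lambda>k. u (H [k] [])" G'] GG by simp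
    have g: "Gmono (\<lambda>k. u (H [k] [])) xs" using lu(2) Gmono_cong[of xs "\<lambda>k. u (H [k] [])" G'] GG by simp
    have zl: "z = liftH i (\<lambda>k. u (H [k] [])) xs x" using lu(3) liftH_cong[of xs "\<lambda>k. u (H [k] [])" G'] GG by simp
    have xh: "ishom (T xs) (T ts) x" unfolding x_def using comp_ishom[OF z sig_ishom[OF i]] .
    have yh: "ishom (T xs) Ic (comp (rhoH ts i) z)" using comp_ishom[OF z rho_ishom[OF i]] .
    have uy: "u = IJ (T xs) (comp (rhoH ts i) z)" unfolding u_def using IJ_rho[OF i z] by simp
    have "(i, Inl Q) = LL ts i (\<lambda>k. u (H [k] [])) xs x" unfolding LL_def using b(2) Inl zl by simp
    then show ?thesis unfolding NF_def PZ Let_def using i v g xh yh uy by auto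
  qed
qed

lemma NF_trans:
  assumes nb: "NF ts xs b" and q: "(a, b) \<in> qrel (Rzig (T ts)) (T xs)" and e: "PhiZ (T ts) (T xs) a = PhiZ (T ts) (T xs) b"
  shows "NF ts xs a"
proof -
  obtain x u where xu: "PhiZ (T ts) (T xs) b = (x, u)" by (cases "PhiZ (T ts) (T xs) b")
  let ?R = "qrel (Rzig (T ts)) (T xs)"
  define Gu where "Gu = (\<lambda>k. u (H [k] []))"
  have B: "(\<exists>c\<le>length ts. x = constH (T xs) c \<and> (b, (c, Inl (qrel (RT (T ts) c) (T xs) `` {Inr u}))) \<in> ?R)
   \<or> (\<exists>i\<le>length ts. valid i Gu xs x \<and> Gmono Gu xs \<and> ishom (T xs) (T ts) x \<and> (\<exists>y. ishom (T xs) Ic y \<and> u = IJ (T xs) y)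
        \<and> (b, LL ts i Gu xs x) \<in> ?R)" using nb xu unfolding NF_def Gu_def by (simp add: Let_def)
  have "(\<exists>c\<le>length ts. x = constH (T xs) c \<and> (a, (c, Inl (qrel (RT (T ts) c) (T xs) `` {Inr u}))) \<in> ?R)
   \<or> (\<exists>i\<le>length ts. valid i Gu xs x \<and> Gmono Gu xs \<and> ishom (T xs) (T ts) x \<and> (\<exists>y. ishom (T xs) Ic y \<and> u = IJ (T xs) y)
        \<and> (a, LL ts i Gu xs x) \<in> ?R)"
    using B qrel_trans[OF q] by blast
  then show ?thesis unfolding NF_def using e xu Gu_def by (simp add: Let_def)
qed

lemma NF_all:
  assumes a: "a \<in> fst (Dzig (T ts)) (T xs)"
  shows "NF ts xs a"
proof (cases a)
  case (Pair i z)
  show ?thesis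
  proof (cases z)
    case (Inl Q) then show ?thesis using a Pair NF_Inl by (auto simp: Dzig_car)
  next
    case (Inr x)
    then have h: "i < length ts" "ishom (T xs) (T ts) x" using a Pair by (auto simp: Dzig_car)
    define b :: "nat \<times> ((hom + (hom \<Rightarrow> bool)) set + hom)" where "b = (i, Inl (phi (T ts) i (T xs) (comp (alpha (T ts) i) x)))"
    have ab: "(a, b) \<in> Rzig (T ts) (T xs)" unfolding Rzig_mem b_def using h Pair Inr by auto
    have e: "PhiZ (T ts) (T xs) a = PhiZ (T ts) (T xs) b" using Z_resp ab unfolding resp_def by blast
    have "b \<in> fst (Dzig (T ts)) (T xs)" using Z_RX ab unfolding RX_def by blast
    then have "NF ts xs b" unfolding b_def using NF_Inl by (auto simp: Dzig_car)
    moreover have q: "(a, b) \<in> qrel (Rzig (T ts)) (T xs)" using ab by (rule qrel_base)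
    ultimately show ?thesis using NF_trans e by blast
  qed
qed

lemma Z_inj:
  assumes a: "a \<in> fst (Dzig (T ts)) s" and b: "b \<in> fst (Dzig (T ts)) s" and e: "PhiZ (T ts) s a = PhiZ (T ts) s b"
  shows "(a, b) \<in> qrel (Rzig (T ts)) s"
proof -
  obtain xs where s: "s = T xs" by (cases s)
  obtain x u where xu: "PhiZ (T ts) s a = (x, u)" by (cases "PhiZ (T ts) s a")
  have xu': "PhiZ (T ts) s b = (x, u)" using xu e by simp
  define Gu where "Gu = (\<lambda>k. u (H [k] []))"
  have na: "NF ts xs a" and nb: "NF ts xs b" using NF_all a b s by auto
  let ?R = "qrel (Rzig (T ts)) (T xs)"
  have A: "(\<exists>c\<le>length ts. x = constH (T xs) c \<and> (a, (c, Inl (qrel (RT (T ts) c) (T xs) `` {Inr u}))) \<in> ?R)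
   \<or> (\<exists>i\<le>length ts. valid i Gu xs x \<and> Gmono Gu xs \<and> ishom (T xs) (T ts) x \<and> (\<exists>y. ishom (T xs) Ic y \<and> u = IJ (T xs) y)
        \<and> (a, LL ts i Gu xs x) \<in> ?R)" using na xu s unfolding NF_def Gu_def by (simp add: Let_def)
  have B: "(\<exists>c\<le>length ts. x = constH (T xs) c \<and> (b, (c, Inl (qrel (RT (T ts) c) (T xs) `` {Inr u}))) \<in> ?R)
   \<or> (\<exists>i\<le>length ts. valid i Gu xs x \<and> Gmono Gu xs \<and> ishom (T xs) (T ts) x \<and> (\<exists>y. ishom (T xs) Ic y \<and> u = IJ (T xs) y)
        \<and> (b, LL ts i Gu xs x) \<in> ?R)" using nb xu' s unfolding NF_def Gu_def by (simp add: Let_def)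
  have mixed: "(a', b') \<in> ?R" if
    c: "c \<le> length ts" "x = constH (T xs) c" "(a', (c, Inl (qrel (RT (T ts) c) (T xs) `` {Inr u}))) \<in> ?R"
    and i: "i \<le> length ts" "valid i Gu xs x" "ishom (T xs) (T ts) x" "ishom (T xs) Ic y" "u = IJ (T xs) y"
       "(b', LL ts i Gu xs x) \<in> ?R" for a' b' c i y
  proof -
    have vc: "valid c Gu xs x" using c(2) unfolding valid_def by (simp add: und_constH)
    have ch: "(LL ts i Gu xs x, LL ts c Gu xs x) \<in> ?R" using chain[OF i(3) i(1) c(1) i(2) vc] .
    have G: "Gu k = (und y ! k = 1)" if "k \<le> length xs" for k
      using IJ_val[OF that] i(5) unfolding Gu_def by simp
    have eqL: "LL ts c Gu xs x = (c, Inl (qrel (RT (T ts) c) (T xs) `` {Inr u}))"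
      using const_LL[OF i(4) c(1), of Gu] G c(2) i(5) by simp
    have "(LL ts c Gu xs x, b') \<in> ?R" using qrel_sym[OF qrel_trans[OF i(6) ch]] .
    then have "((c, Inl (qrel (RT (T ts) c) (T xs) `` {Inr u})), b') \<in> ?R" using eqL by simp
    then show ?thesis using qrel_trans[OF c(3)] by blast
  qed
  from A show ?thesis
  proof
    assume "\<exists>c\<le>length ts. x = constH (T xs) c \<and> (a, (c, Inl (qrel (RT (T ts) c) (T xs) `` {Inr u}))) \<in> ?R"
    then obtain c where ca: "c \<le> length ts" "x = constH (T xs) c" "(a, (c, Inl (qrel (RT (T ts) c) (T xs) `` {Inr u}))) \<in> ?R" by blast
    from B show ?thesis
    proof
      assume "\<exists>c\<le>length ts. x = constH (T xs) c \<and> (b, (c, Inl (qrel (RT (T ts) c) (T xs) `` {Inr u}))) \<in> ?R"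
      then obtain c' where cb: "c' \<le> length ts" "x = constH (T xs) c'" "(b, (c', Inl (qrel (RT (T ts) c') (T xs) `` {Inr u}))) \<in> ?R" by blast
      have "c = c'" using ca(2) cb(2) constH_inj by metis
      then have "((c, Inl (qrel (RT (T ts) c) (T xs) `` {Inr u})), b) \<in> ?R" using qrel_sym[OF cb(3)] by simp
      then show ?thesis using qrel_trans[OF ca(3)] s by simp
    next
      assume "\<exists>i\<le>length ts. valid i Gu xs x \<and> Gmono Gu xs \<and> ishom (T xs) (T ts) x \<and> (\<exists>y. ishom (T xs) Ic y \<and> u = IJ (T xs) y)
        \<and> (b, LL ts i Gu xs x) \<in> ?R"
      then obtain i y where "i \<le> length ts" "valid i Gu xs x" "ishom (T xs) (T ts) x" "ishom (T xs) Ic y" "u = IJ (T xs) y"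
        "(b, LL ts i Gu xs x) \<in> ?R" by blast
      then have "(a, b) \<in> ?R" by (rule mixed[OF ca])
      then show ?thesis using s by simp
    qed
  next
    assume "\<exists>i\<le>length ts. valid i Gu xs x \<and> Gmono Gu xs \<and> ishom (T xs) (T ts) x \<and> (\<exists>y. ishom (T xs) Ic y \<and> u = IJ (T xs) y)
        \<and> (a, LL ts i Gu xs x) \<in> ?R"
    then obtain i y where ia: "i \<le> length ts" "valid i Gu xs x" "ishom (T xs) (T ts) x" "ishom (T xs) Ic y" "u = IJ (T xs) y"
      "(a, LL ts i Gu xs x) \<in> ?R" by blast
    from B show ?thesis
    proof
      assume "\<exists>c\<le>length ts. x = constH (T xs) c \<and> (b, (c, Inl (qrel (RT (T ts) c) (T xs) `` {Inr u}))) \<in> ?R"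
      then obtain c where cb: "c \<le> length ts" "x = constH (T xs) c" "(b, (c, Inl (qrel (RT (T ts) c) (T xs) `` {Inr u}))) \<in> ?R" by blast
      have ba: "(b, a) \<in> ?R" using mixed[OF cb ia] .
      show ?thesis using qrel_sym[OF ba] s by simp
    next
      assume "\<exists>i\<le>length ts. valid i Gu xs x \<and> Gmono Gu xs \<and> ishom (T xs) (T ts) x \<and> (\<exists>y. ishom (T xs) Ic y \<and> u = IJ (T xs) y)
        \<and> (b, LL ts i Gu xs x) \<in> ?R"
      then obtain j where jb: "j \<le> length ts" "valid j Gu xs x" "(b, LL ts j Gu xs x) \<in> ?R" by blast
      have ij: "(LL ts i Gu xs x, LL ts j Gu xs x) \<in> ?R" using chain[OF ia(3) ia(1) jb(1) ia(2) jb(2)] .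
      show ?thesis using qrel_trans[OF ia(6) qrel_trans[OF ij qrel_sym[OF jb(3)]]] s by simp
    qed
  qed
qed

lemma JJ'_quot: "JJ' \<theta> = quot_psh (Dzig \<theta>) (Rzig \<theta>)" by (simp add: JJ'_def)

lemma JJ'_iso: "isoP (JJ' (T ts)) (Mpsh (T ts)) (qmap (PhiZ (T ts)))"
  unfolding JJ'_quot
  by (rule quot_isoP[OF Z_RX Z_resp Z_closed Z_natural]) (simp_all add: Z_surj Mpsh_def Z_inj)

lemma JJ'_closed: "closed (JJ' (T ts))"
  unfolding JJ'_quot by (rule quot_closed[OF Z_RX Z_closed])

theorem main_iso: "psh_iso n (JJ \<theta>) (JJ' \<theta>)"
proof -
  obtain ts where th: "\<theta> = T ts" by (cases \<theta>)
  show ?thesis unfolding th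
    by (rule isoP_psh_iso[OF isoP_trans_inv[OF JJ_iso JJ'_iso JJ'_closed]])
qed


theorem proposition3p13:
  fixes n :: nat and \<theta> :: tree
  assumes "1 \<le> n" and "obj n \<theta>"
  shows "psh_iso n (JJ \<theta>) (JJ' \<theta>)"
  by (rule main_iso)

end
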